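(* Let $q$ be a prime power, $n\ge 1$ an integer, $P\in\mathbb F_q[\theta]$ nonzero and $\mathfrak P\in\mathbb F_q[\theta]$ irreducible. Then the following identities hold in the relevant rings of power series in $U$ (with the indicated substitutions for $T$ and $U$): 1. For $d\in\mathbb F_q$: $L_{\mathfrak P(\theta+d)}(\mathfrak C^n_{P(\theta+d)},T-d,U)=L_{\mathfrak P}(\mathfrak C^n_P,T,U)$. 2. For $c\in\mathbb F_q^*$: $L_{\mathfrak P(c\theta)}(\mathfrak C^n_{P(c\theta)},c^{-1}T,c^nU)=L_{\mathfrak P}(\mathfrak C^n_P,T,U)$. 3. If $\mathfrak P$ is not an associate of $\theta$, $m\ge\deg P$ is an integer with $m\equiv -n \pmod{q-1}$, $\iota(P):=\theta^mP(1/\theta)$ and $\iota(\mathfrak P):=\theta^{\deg\mathfrak P}\mathfrak P(1/\theta)$, then $L_{\iota(\mathfrak P)}(\mathfrak C^n_{\iota(P)},T^{-1},(-T)^nU)=L_{\mathfrak P}(\mathfrak C^n_P,T,U)$. 4. For $c\in\overline{\mathbb F}_q$ with $c^n\in\mathbb F_q^*$: $L_{\mathfrak P}(\mathfrak C^n_{c^{-n}P},T,c^nU)=L_{\mathfrak P}(\mathfrak C^n_P,T,U)$. 5. For every integer $k\ge 0$: $L_{\mathfrak P}(\mathfrak C^{q^kn}_P,T,U)=L_{\mathfrak P}(\mathfrak C^n_P,T^{q^k},U)$.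
   Context: Let $q$ be a prime power and $\theta,T$ independent variables. For nonzero $P\in\mathbb F_q[\theta]$ and an integer $n\ge1$, $\mathfrak C^n_P$ denotes the twisted $n$-th tensor power of the Carlitz module: the Anderson T-motive over $\mathbb F_q(\theta)$ which is free of rank $1$ over $\mathbb F_q(\theta)[T]$ with a basis element $e$, where $\tau$ acts semilinearly ($\tau(\theta x)=\theta^q\tau(x)$, $\tau(Tx)=T\tau(x)$) with $\tau e=P(T-\theta)^ne$. For an irreducible $\mathfrak P\in\mathbb F_q[\theta]$ of degree $d$, let $\tilde Q\in(\mathbb F_q[\theta]/\mathfrak P)[T]$ be the reduction of $P(T-\theta)^n$ modulo $\mathfrak P$; for $a=\sum_i c_iT^i$ with $c_i\in\mathbb F_q[\theta]/\mathfrak P$ put $a^{(k)}=\sum_i c_i^{q^k}T^i$, and $\tilde Q^{[d]}=\tilde Q^{(d-1)}\cdots\tilde Q^{(1)}\tilde Q$, which lies in $\mathbb F_q[T]$. The local $L$-factor is $L_{\mathfrak P}(\mathfrak C^n_P,T,U)=(1-\tilde Q^{[d]}U^d)^{-1}\in\mathbb F_q[T][[U]]$; it depends only on the ideal $(\mathfrak P)$. The notation $L_{\mathfrak P}(\mathfrak C^n_P,f(T),g(T)U)$ means this power series with $T$ replaced by $f(T)$ and $U$ by $g(T)U$. *)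

theory Defs
  imports "HOL-Library.Cardinality" "HOL-Computational_Algebra.Polynomial" "HOL-Computational_Algebra.Formal_Power_Series" "HOL-Number_Theory.Cong" "HOL-Computational_Algebra.Fraction_Field"
begin

(* F_q is a finite field type 'a; q = CARD('a).
   Polynomials in theta: 'a poly.  Polynomials in T with coefficients in F_q[theta]: 'a poly poly.
   Elements of F_q[theta]/P are represented by 'a poly representatives, reduced "mod P". *)

(* The polynomial P (T - theta)^n, as a polynomial in T with coefficients in F_q[theta]. *)
definition twistQ :: "'a::field poly \<Rightarrow> nat \<Rightarrow> 'a poly poly" where
  "twistQ P n = [:P:] * [: - [:0, 1:], 1 :] ^ n"

(* Q~^(k): reduce mod the prime and raise the coefficients to the q^k-th power *)
definition frob_red :: "'a::{finite,field} poly \<Rightarrow> nat \<Rightarrow> 'a poly poly \<Rightarrow> 'a poly poly" where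
  "frob_red Pr k Q = map_poly (\<lambda>c. (c ^ (CARD('a) ^ k)) mod Pr) Q"

(* Q~^[d] = Q~^(d-1) ... Q~^(1) Q~, d = deg Pr, computed in (F_q[theta]/Pr)[T] *)
definition Qd_res :: "'a::{finite,field} poly \<Rightarrow> nat \<Rightarrow> 'a poly \<Rightarrow> 'a poly poly" where
  "Qd_res Pr n P = map_poly (\<lambda>c. c mod Pr)
      (\<Prod>k<degree Pr. frob_red Pr k (twistQ P n))"

(* Q~^[d] viewed in F_q[T] (its coefficients are residues of constants, i.e. lie in F_q) *)
definition Qd :: "'a::{finite,field} poly \<Rightarrow> nat \<Rightarrow> 'a poly \<Rightarrow> 'a poly" where
  "Qd Pr n P = map_poly (\<lambda>c. coeff c 0) (Qd_res Pr n P)"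

(* L_Pr(C^n_P, T, U) = (1 - Q~^[d] U^d)^{-1} = sum_j (Q~^[d])^j U^(d j)  in F_q[T][[U]] *)
definition Lfac :: "'a::{finite,field} poly \<Rightarrow> nat \<Rightarrow> 'a poly \<Rightarrow> 'a poly fps" where
  "Lfac Pr n P = Abs_fps (\<lambda>i. if degree Pr dvd i then (Qd Pr n P) ^ (i div degree Pr) else 0)"

(* F_q(T) as the fraction field of F_q[T] *)
definition Tfr :: "'a::field poly fract" where
  "Tfr = Fract [:0, 1:] 1"

definition constfr :: "'a::field \<Rightarrow> 'a poly fract" where
  "constfr a = Fract [:a:] 1"

(* substitution T := f(T), U := g(T) U in a power series over F_q[T];
   result is a power series over F_q(T) *)
definition fps_subst_TU :: "'a::field poly fps \<Rightarrow> 'a poly fract \<Rightarrow> 'a poly fract \<Rightarrow> 'a poly fract fps" where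
  "fps_subst_TU F f g = Abs_fps (\<lambda>i. poly (map_poly constfr (fps_nth F i)) f * g ^ i)"

definition Lsub :: "'a::{finite,field} poly \<Rightarrow> nat \<Rightarrow> 'a poly \<Rightarrow> 'a poly fract \<Rightarrow> 'a poly fract \<Rightarrow> 'a poly fract fps" where
  "Lsub Pr n P f g = fps_subst_TU (Lfac Pr n P) f g"

(* iota_m(P) = theta^m P(1/theta), for m \<ge> deg P *)
definition iota :: "nat \<Rightarrow> 'a::field poly \<Rightarrow> 'a poly" where
  "iota m P = (\<Sum>i\<le>degree P. monom (coeff P i) (m - i))"

definition is_field_hom :: "('a::field \<Rightarrow> 'b::field) \<Rightarrow> bool" where
  "is_field_hom h \<longleftrightarrow> h 0 = 0 \<and> h 1 = 1 \<and> (\<forall>x y. h (x + y) = h x + h y \<and> h (x * y) = h x * h y)"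

end

theory Submission
  imports Defs "HOL-Algebra.Sylow" "HOL-Number_Theory.Residues"
    "HOL-Computational_Algebra.Polynomial_Factorial"
begin

definition hl :: "('a::comm_ring_1 \<Rightarrow> 'b::comm_ring_1) \<Rightarrow> bool" where
  "hl h \<longleftrightarrow> h 0 = 0 \<and> h 1 = 1 \<and> (\<forall>x y. h (x + y) = h x + h y \<and> h (x * y) = h x * h y)"

lemma hlD: assumes "hl h"
  shows "h 0 = 0" "h 1 = 1" "h (x + y) = h x + h y" "h (x * y) = h x * h y"
  using assms unfolding hl_def by auto

lemma hl_uminus: assumes "hl h" shows "h (- x) = - h x"
proof -
  have "h (- x) + h x = 0" using hlD(3)[OF assms, of "-x" x] hlD(1)[OF assms] by simp
  thus ?thesis by (simp add: eq_neg_iff_add_eq_0)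
qed

lemma hl_diff: assumes "hl h" shows "h (x - y) = h x - h y"
  using hlD(3)[OF assms, of x "-y"] hl_uminus[OF assms, of y] by simp

lemma hl_sum: assumes "hl h" shows "h (sum f A) = (\<Sum>a\<in>A. h (f a))"
  by (induction A rule: infinite_finite_induct) (auto simp: hlD[OF assms])

lemma hl_prod: assumes "hl h" shows "h (prod f A) = (\<Prod>a\<in>A. h (f a))"
  by (induction A rule: infinite_finite_induct) (auto simp: hlD[OF assms])

lemma hl_power: assumes "hl h" shows "h (x ^ n) = h x ^ n"
  by (induction n) (auto simp: hlD[OF assms])

lemma hl_of_nat: assumes "hl h" shows "h (of_nat n) = of_nat n"
  by (induction n) (auto simp: hlD[OF assms])

lemma hl_comp: "hl g \<Longrightarrow> hl h \<Longrightarrow> hl (g \<circ> h)"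
  unfolding hl_def by auto

lemma map_poly_add_hl: assumes "hl h"
  shows "map_poly h (p + q) = map_poly h p + map_poly h q"
  by (rule poly_eqI) (simp add: coeff_map_poly hlD[OF assms])

lemma map_poly_mult_hl: assumes "hl h"
  shows "map_poly h (p * q) = map_poly h p * map_poly h q"
  by (rule poly_eqI) (simp add: coeff_map_poly hlD[OF assms] coeff_mult hl_sum[OF assms])

lemma hl_map_poly: assumes "hl h" shows "hl (map_poly h)"
  unfolding hl_def using map_poly_add_hl[OF assms] map_poly_mult_hl[OF assms] hlD[OF assms]
  by auto

lemma map_poly_const_hl: assumes "hl h" shows "map_poly h [:a:] = [:h a:]"
  by (rule poly_eqI) (simp add: coeff_map_poly hlD[OF assms] coeff_pCons split: nat.splits)

lemma map_poly_pcompose_hl: assumes "hl h"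
  shows "map_poly h (pcompose p q) = pcompose (map_poly h p) (map_poly h q)"
proof (induction p)
  case 0 then show ?case by simp
next
  case (pCons a p)
  have "map_poly h (pCons a p) = pCons (h a) (map_poly h p)"
    using hlD(1)[OF assms] by (simp add: map_poly_pCons)
  then show ?case using pCons
    by (simp add: pcompose_pCons map_poly_add_hl[OF assms] map_poly_mult_hl[OF assms]
        map_poly_const_hl[OF assms])
qed

lemma hl_const_poly: "hl (\<lambda>a. [:a:])"
  unfolding hl_def by (auto simp: one_pCons)

lemma hl_pcompose: "hl (\<lambda>x. pcompose x t)"
  unfolding hl_def by (auto simp: pcompose_add pcompose_mult pcompose_1)

lemma hl_id: "hl (\<lambda>x. x)" unfolding hl_def by auto


lemma prime_CHAR_ff: "prime CHAR('a::{finite,field})"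
  using prime_CHAR_semidom[where ?'a='a] finite_imp_CHAR_pos[where ?'a='a] by auto

lemma add_pow_is_of_nat:
  fixes x :: "'a::{finite,field}"
  shows "x [^]\<^bsub>\<lparr>carrier = (C :: 'a set), monoid.mult = (+), one = (0 :: 'a)\<rparr>\<^esub> (n::nat) = of_nat n * x"
  by (induction n) (auto simp: nat_pow_def algebra_simps)

lemma prime_dvd_card_ff:
  assumes l: "prime l" and dv: "l dvd CARD('a::{finite,field})"
  shows "l = CHAR('a)"
proof -
  define G where "G = \<lparr> carrier = (UNIV :: 'a set), monoid.mult = (+), one = (0 :: 'a) \<rparr>"
  interpret group G
  proof (rule groupI)
    fix x assume x: "x \<in> carrier G"
    show "\<exists>y\<in>carrier G. y \<otimes>\<^bsub>G\<^esub> x = \<one>\<^bsub>G\<^esub>"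
      by (intro bexI[of _ "-x"]) (auto simp: G_def)
  qed (auto simp: G_def add_ac)
  obtain m where m: "CARD('a) = l * m" using dv by (auto elim: dvdE)
  have "order G = l ^ 1 * m" using m by (simp add: order_def G_def)
  from sylow_thm[OF l is_group this] obtain H where H: "subgroup H G" "card H = l ^ 1"
    by (auto simp: G_def)
  have "card H \<ge> 2" using H l prime_ge_2_nat by auto
  have "H \<noteq> {0}" using \<open>card H \<ge> 2\<close> by auto
  moreover have "0 \<in> H" using subgroup.one_closed[OF H(1)] by (simp add: G_def)
  ultimately obtain x where x: "x \<in> H" "x \<noteq> 0" by blast
  interpret Hg: group "G\<lparr>carrier := H\<rparr>" using subgroup.subgroup_is_group[OF H(1) is_group] .
  have "x [^]\<^bsub>G\<lparr>carrier := H\<rparr>\<^esub> Coset.order (G\<lparr>carrier := H\<rparr>) = \<one>\<^bsub>G\<lparr>carrier := H\<rparr>\<^esub>"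
    by (rule Hg.pow_order_eq_1) (use x in simp)
  hence "of_nat l * x = 0"
    using H(2) by (simp add: order_def G_def add_pow_is_of_nat)
  hence "of_nat l = (0::'a)" using x by simp
  hence "CHAR('a) dvd l" by (simp add: of_nat_eq_0_iff_char_dvd)
  thus ?thesis using l prime_CHAR_ff[where 'a='a]
    using primes_dvd_imp_eq by metis
qed

lemma card_char_power: "\<exists>r. CARD('a::{finite,field}) = CHAR('a) ^ r"
proof -
  define p where "p = CHAR('a)"
  define q where "q = CARD('a)"
  obtain y where y: "q = p ^ multiplicity p q * y" "\<not> p dvd y"
    proof (rule multiplicity_decompose')
    show "q \<noteq> 0" unfolding q_def by simp
    show "\<not> is_unit p" unfolding p_def using prime_CHAR_ff[where 'a='a] not_prime_unit by blast
  qed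
  have "y = 1"
  proof (rule ccontr)
    assume "y \<noteq> 1"
    then obtain l where l: "prime l" "l dvd y" using prime_factor_nat by blast
    have "l dvd p ^ multiplicity p q * y" using l(2) by (rule dvd_mult)
    hence "l dvd q" using y(1) by metis
    hence "l = p" using prime_dvd_card_ff[OF l(1)] unfolding q_def p_def by blast
    thus False using l(2) y(2) by simp
  qed
  hence "q = p ^ multiplicity p q" using y(1) by simp
  thus ?thesis unfolding p_def q_def by blast
qed

lemma ff_power_card: "(x::'a::{finite,field}) ^ CARD('a) = x"
proof (cases "x = 0")
  case False
  have "x * (\<Prod>y\<in>UNIV-{0}. x * y) = x * x ^ (card (UNIV :: 'a set) - 1) * \<Prod>(UNIV-{0})"
    by (simp add: prod.distrib mult_ac)
  also have "x * x ^ (card (UNIV :: 'a set) - 1) = x ^ Suc (card (UNIV :: 'a set) - 1)"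
    by (subst power_Suc) auto
  also have "Suc (card (UNIV :: 'a set) - 1) = card (UNIV :: 'a set)"
    using finite_UNIV_card_ge_0[where ?'a = 'a] by simp
  also have "(\<Prod>y\<in>UNIV-{0}. x * y) = (\<Prod>y\<in>UNIV-{0}. y)"
    by (rule prod.reindex_bij_witness[of _ "\<lambda>y. y / x" "\<lambda>y. x * y"]) (use False in auto)
  finally show ?thesis
    by simp
qed (use finite_UNIV_card_ge_0[where ?'a = 'a] in auto)

lemma ff_power_card_pow: "(x::'a::{finite,field}) ^ (CARD('a) ^ k) = x"
  by (induction k) (simp_all add: ff_power_card power_mult flip: power_Suc2)

lemma card_ge2: "CARD('a::{finite,field}) \<ge> 2"
proof -
  have "{0, 1::'a} \<subseteq> UNIV" by simp
  hence "card {0,1::'a} \<le> CARD('a)" by (intro card_mono) auto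
  thus ?thesis by simp
qed

lemma freshman_card:
  fixes x y :: "'b::comm_semiring_1"
  assumes "CHAR('b) = CHAR('a::{finite,field})"
  shows "(x + y) ^ (CARD('a) ^ k) = x ^ (CARD('a) ^ k) + y ^ (CARD('a) ^ k)"
proof -
  obtain r where r: "CARD('a) = CHAR('a) ^ r" using card_char_power by blast
  show ?thesis
    by (rule freshmans_dream'[where n = "r * k"])
      (use prime_CHAR_ff[where 'a='a] assms r in \<open>auto simp: power_mult\<close>)
qed


hide_const (open) up_ring.coeff up_ring.monom

section \<open>Frobenius maps\<close>

definition fr :: "nat \<Rightarrow> 'a::{finite,field} poly \<Rightarrow> 'a poly" where
  "fr j c = c ^ (CARD('a) ^ j)"

definition FF :: "nat \<Rightarrow> 'a::{finite,field} poly poly \<Rightarrow> 'a poly poly" where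
  "FF j = map_poly (fr j)"

lemma fr_0[simp]: "fr j (0::'a::{finite,field} poly) = 0"
  by (simp add: fr_def)

lemma hl_fr: "hl (fr j :: 'a::{finite,field} poly \<Rightarrow> 'a poly)"
  unfolding hl_def fr_def
  by (auto simp: power_mult_distrib freshman_card[where 'a='a and 'b="'a poly"])

lemma hl_FF: "hl (FF j :: 'a::{finite,field} poly poly \<Rightarrow> 'a poly poly)"
  unfolding FF_def by (rule hl_map_poly[OF hl_fr])

lemma fr_fr: "fr j (fr k c) = fr (j + k) c"
  by (simp add: fr_def power_mult power_add mult.commute flip: power_mult)

lemma FF_FF: "FF j (FF k A) = FF (j + k) A"
  unfolding FF_def by (simp add: map_poly_map_poly o_def fr_fr)

lemma fr_const: "fr j [:a::'a::{finite,field}:] = [:a:]"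
  by (simp add: fr_def poly_const_pow ff_power_card_pow)

lemma FF_constpoly: "FF j (map_poly (\<lambda>a. [:a:]) r) = map_poly (\<lambda>a::'a::{finite,field}. [:a:]) r"
  unfolding FF_def by (simp add: map_poly_map_poly o_def fr_const)

lemma coeff_FF: "coeff (FF j A) i = fr j (coeff A i)"
  unfolding FF_def by (simp add: coeff_map_poly)

section \<open>Coefficientwise congruence\<close>

definition cg :: "'a::field poly \<Rightarrow> 'a poly poly \<Rightarrow> 'a poly poly \<Rightarrow> bool" where
  "cg Pr A B \<longleftrightarrow> [:Pr:] dvd (A - B)"

lemma cg_coeff: "cg Pr A B \<longleftrightarrow> (\<forall>i. [coeff A i = coeff B i] (mod Pr))"
  unfolding cg_def const_poly_dvd_iff cong_iff_dvd_diff by simp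

lemma cg_refl[simp]: "cg Pr A A" by (simp add: cg_def)
lemma cg_sym: "cg Pr A B \<Longrightarrow> cg Pr B A" by (simp add: cg_coeff cong_sym)
lemma cg_trans: "cg Pr A B \<Longrightarrow> cg Pr B C \<Longrightarrow> cg Pr A C"
  by (auto simp: cg_coeff intro: cong_trans)
lemma cg_add: "cg Pr A B \<Longrightarrow> cg Pr C D \<Longrightarrow> cg Pr (A + C) (B + D)"
  by (auto simp: cg_coeff intro: cong_add)
lemma cg_mult: "cg Pr A B \<Longrightarrow> cg Pr C D \<Longrightarrow> cg Pr (A * C) (B * D)"
proof -
  assume 1: "cg Pr A B" and 2: "cg Pr C D"
  have "A * C - B * D = A * (C - D) + (A - B) * D" by (simp add: algebra_simps)
  thus ?thesis using 1 2 unfolding cg_def by (metis dvd_add dvd_mult dvd_mult2)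
qed
lemma cg_prod: "(\<And>x. x \<in> S \<Longrightarrow> cg Pr (f x) (g x)) \<Longrightarrow> cg Pr (prod f S) (prod g S)"
  by (induction S rule: infinite_finite_induct) (auto intro: cg_mult)
lemma cg_power: "cg Pr A B \<Longrightarrow> cg Pr (A ^ n) (B ^ n)"
  by (induction n) (auto intro: cg_mult)

lemma cg_map_mod: "cg Pr (map_poly (\<lambda>c. c mod Pr) A) A"
  by (simp add: cg_coeff coeff_map_poly cong_def)

lemma cg_red_eq: "cg Pr A B \<Longrightarrow> map_poly (\<lambda>c. c mod Pr) A = map_poly (\<lambda>c. c mod Pr) B"
  by (intro poly_eqI) (simp add: cg_coeff coeff_map_poly cong_def)

lemma cg_FF: "cg Pr A B \<Longrightarrow> cg Pr (FF j A) (FF j B)"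
  by (simp add: cg_coeff coeff_FF fr_def cong_pow)

lemma cg_pcompose: "cg Pr A B \<Longrightarrow> cg Pr (pcompose A R) (pcompose B R)"
  unfolding cg_def
proof -
  assume "[:Pr:] dvd A - B"
  then obtain k where "A - B = [:Pr:] * k" by (elim dvdE)
  hence "pcompose A R - pcompose B R = [:Pr:] * pcompose k R"
    by (metis pcompose_diff pcompose_mult pcompose_const)
  thus "[:Pr:] dvd pcompose A R - pcompose B R" by (metis dvd_triv_left)
qed

lemma hl_cong:
  fixes h :: "'a::field poly \<Rightarrow> 'a poly"
  assumes h: "hl h" and dv: "Pr dvd h Pr'" and c: "[x = y] (mod Pr')"
  shows "[h x = h y] (mod Pr)"
proof -
  have "Pr' dvd x - y" using c by (simp add: cong_iff_dvd_diff)
  then obtain k where "x - y = Pr' * k" by (elim dvdE)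
  hence "h x - h y = h Pr' * h k" by (metis h hlD(4) hl_diff)
  thus ?thesis using dv by (simp add: cong_iff_dvd_diff)
qed

lemma cg_map_hl:
  fixes h :: "'a::field poly \<Rightarrow> 'a poly"
  assumes h: "hl h" and dv: "Pr dvd h Pr'" and c: "cg Pr' A B"
  shows "cg Pr (map_poly h A) (map_poly h B)"
  using c hl_cong[OF h dv] hlD(1)[OF h] by (simp add: cg_coeff coeff_map_poly)


lemma irr_deg_pos: fixes Pr :: "'a::field poly" assumes "irreducible Pr" shows "degree Pr > 0"
proof -
  have "Pr \<noteq> 0" "\<not> is_unit Pr" using assms by (auto simp: irreducible_def)
  thus ?thesis using is_unit_iff_degree by blast
qed

lemma irr_prime_elem: fixes Pr :: "'a::field poly" assumes "irreducible Pr" shows "prime_elem Pr"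
  using assms by (rule field_poly_irreducible_imp_prime)

lemma irr_dvd_mult: fixes Pr :: "'a::field poly" assumes "irreducible Pr"
  shows "Pr dvd a * b \<longleftrightarrow> Pr dvd a \<or> Pr dvd b"
  using prime_elem_dvd_mult_iff[OF irr_prime_elem[OF assms]] .

lemma irr_dvd_prod: fixes Pr :: "'a::field poly" assumes "irreducible Pr" "finite A"
  shows "Pr dvd prod f A \<Longrightarrow> \<exists>x\<in>A. Pr dvd f x"
  using assms(2)
proof (induction A rule: finite_induct)
  case empty
  then have "is_unit Pr" by simp
  then show ?case using assms(1) by (auto simp: irreducible_def)
next
  case (insert x F)
  have "Pr dvd f x * prod f F" using insert.prems insert.hyps by simp
  hence "Pr dvd f x \<or> Pr dvd prod f F" using irr_dvd_mult[OF assms(1)] by blast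
  then show ?case using insert.IH by blast
qed

lemma small_dvd_zero: fixes Pr y :: "'a::field poly"
  assumes "degree y < degree Pr" "Pr dvd y" shows "y = 0"
proof (rule ccontr)
  assume "y \<noteq> 0"
  hence "degree Pr \<le> degree y" using assms(2) dvd_imp_degree_le by blast
  thus False using assms(1) by simp
qed

lemma card_deg_less:
  assumes "d > 0"
  shows "card {y::'a::{finite,field} poly. degree y < d} = CARD('a) ^ d"
proof -
  let ?L = "{xs::'a list. set xs \<subseteq> UNIV \<and> length xs = d}"
  have "bij_betw Poly ?L {y. degree y < d}"
  proof (rule bij_betw_imageI)
    show "inj_on Poly ?L"
    proof (rule inj_onI)
      fix xs ys assume xs: "xs \<in> ?L" and ys: "ys \<in> ?L" and eq: "Poly xs = Poly ys"
      have "\<And>i. nth_default 0 xs i = nth_default 0 ys i" using eq by (metis coeff_Poly_eq)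
      thus "xs = ys" using xs ys by (intro nth_equalityI) (auto, metis nth_default_nth)
    qed
    show "Poly ` ?L = {y. degree y < d}"
    proof (intro equalityI subsetI)
      fix y assume "y \<in> Poly ` ?L"
      then obtain xs where "length xs = d" "y = Poly xs" by auto
      thus "y \<in> {y. degree y < d}" using assms
        by (auto intro!: degree_lessI simp: nth_default_beyond)
    next
      fix y :: "'a poly" assume y: "y \<in> {y. degree y < d}"
      define xs where "xs = map (coeff y) [0..<d]"
      have "Poly xs = y"
      proof (rule poly_eqI)
        fix i show "coeff (Poly xs) i = coeff y i"
        proof (cases "i < d")
          case True thus ?thesis by (simp add: xs_def nth_default_nth)
        next
          case False thus ?thesis using y by (simp add: xs_def nth_default_beyond coeff_eq_0)
        qed
      qed
      moreover have "xs \<in> ?L" by (simp add: xs_def)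
      ultimately show "y \<in> Poly ` ?L" by (metis image_eqI)
    qed
  qed
  hence "card {y::'a poly. degree y < d} = card ?L" by (simp add: bij_betw_same_card)
  also have "\<dots> = CARD('a) ^ d" using card_lists_length_eq[of "UNIV::'a set" d] by simp
  finally show ?thesis .
qed

lemma fermat_poly:
  fixes Pr x :: "'a::{finite,field} poly"
  assumes irr: "irreducible Pr"
  shows "[x ^ (CARD('a) ^ degree Pr) = x] (mod Pr)"
proof (cases "Pr dvd x")
  case True
  have "CARD('a) ^ degree Pr > 0" by simp
  hence "Pr dvd x ^ (CARD('a) ^ degree Pr)" using True by (metis dvd_power dvd_trans)
  thus ?thesis using True by (simp add: cong_iff_dvd_diff)
next
  case False
  define d where "d = degree Pr"
  have dpos: "d > 0" using irr_deg_pos[OF irr] by (simp add: d_def)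
  have Pr0: "Pr \<noteq> 0" using dpos d_def by auto
  define S where "S = {y::'a poly. degree y < d} - {0}"
  have finS: "finite S"
  proof -
    have "finite {y::'a poly. degree y < d}"
      using card_deg_less[OF dpos, where 'a='a] by (intro card_ge_0_finite) simp
    thus ?thesis by (simp add: S_def)
  qed
  have cardS: "card S = CARD('a) ^ d - 1"
  proof -
    have "(0::'a poly) \<in> {y. degree y < d}" using dpos by simp
    thus ?thesis using card_deg_less[OF dpos, where 'a='a] unfolding S_def
      by (simp add: card_Diff_singleton)
  qed
  have ndvd: "\<not> Pr dvd y" if "y \<in> S" for y
    using that small_dvd_zero[of y Pr] by (auto simp: S_def d_def)
  define h where "h y = (x * y) mod Pr" for y
  have hS: "h y \<in> S" if "y \<in> S" for y
  proof -
    have "\<not> Pr dvd x * y" using False ndvd[OF that] irr_dvd_mult[OF irr] by blast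
    hence "h y \<noteq> 0" by (simp add: h_def mod_eq_0_iff_dvd)
    moreover have "degree (h y) < d" using degree_mod_less'[OF Pr0 \<open>h y \<noteq> 0\<close>[unfolded h_def]]
      by (simp add: h_def d_def)
    ultimately show ?thesis by (simp add: S_def)
  qed
  have injh: "inj_on h S"
  proof (rule inj_onI)
    fix y1 y2 assume y: "y1 \<in> S" "y2 \<in> S" and eq: "h y1 = h y2"
    hence "Pr dvd x * y1 - x * y2" unfolding h_def
      by (metis cong_def cong_iff_dvd_diff)
    hence "Pr dvd x * (y1 - y2)" by (simp add: algebra_simps)
    hence "Pr dvd y1 - y2" using False irr_dvd_mult[OF irr] by blast
    moreover have "degree (y1 - y2) < degree Pr" using y
      by (auto simp: S_def d_def intro: le_less_trans[OF degree_diff_le_max])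
    ultimately show "y1 = y2" using small_dvd_zero by fastforce
  qed
  have hSS: "h ` S = S"
    using hS injh finS by (intro card_subset_eq) (auto simp: card_image)
  have "prod id S = prod id (h ` S)" using hSS by simp
  also have "\<dots> = prod h S" using prod.reindex[OF injh, of id] by simp
  finally have eq1: "prod id S = prod h S" .
  have "[prod h S = prod (\<lambda>y. x * y) S] (mod Pr)"
    by (rule cong_prod) (simp add: h_def)
  also have "prod (\<lambda>y. x * y) S = x ^ card S * prod id S"
    by (simp add: prod.distrib)
  finally have "[1 * prod id S = x ^ card S * prod id S] (mod Pr)" using eq1 by simp
  hence "Pr dvd (x ^ card S - 1) * prod id S"
    by (simp add: cong_iff_dvd_diff algebra_simps dvd_diff_commute)
  moreover have "\<not> Pr dvd prod id S"
    using irr_dvd_prod[OF irr finS] ndvd by auto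
  ultimately have "Pr dvd x ^ card S - 1" using irr_dvd_mult[OF irr] by blast
  hence "[x ^ card S = 1] (mod Pr)" by (simp add: cong_iff_dvd_diff)
  hence "[x * x ^ card S = x * 1] (mod Pr)" by (rule cong_scalar_left)
  moreover have "x * x ^ card S = x ^ (CARD('a) ^ d)"
  proof -
    have "CARD('a) ^ d > 0" by simp
    hence "Suc (card S) = CARD('a) ^ d" using cardS by simp
    thus ?thesis by (metis power_Suc)
  qed
  ultimately show ?thesis by (simp add: d_def)
qed

lemma fermat_poly_pow:
  fixes Pr x :: "'a::{finite,field} poly"
  assumes irr: "irreducible Pr"
  shows "[x ^ (CARD('a) ^ (degree Pr * k)) = x] (mod Pr)"
proof (induction k)
  case 0 then show ?case by simp
next
  case (Suc k)
  have "x ^ (CARD('a) ^ (degree Pr * Suc k)) = (x ^ (CARD('a) ^ (degree Pr * k))) ^ (CARD('a) ^ degree Pr)"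
    by (simp add: power_add power_mult mult.commute flip: power_mult)
  also have "[\<dots> = x ^ (CARD('a) ^ degree Pr)] (mod Pr)" by (rule cong_pow[OF Suc.IH])
  also have "[x ^ (CARD('a) ^ degree Pr) = x] (mod Pr)" by (rule fermat_poly[OF irr])
  finally show ?case .
qed


lemma prod_linear_ff:
  "(\<Prod>a\<in>(UNIV::'a::{finite,field} set). [:-a, 1:]) = monom 1 CARD('a) - [:0, 1:]"
  (is "?L = ?R")
proof -
  have q2: "CARD('a) \<ge> 2" by (rule card_ge2)
  have "degree ?L = (\<Sum>a\<in>UNIV. degree [:-a, 1::'a:])"
    by (rule degree_prod_eq_sum_degree) simp
  hence degL: "degree ?L = CARD('a)" by simp
  have lcL: "lead_coeff ?L = 1" by (simp add: lead_coeff_prod)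
  have degR: "degree ?R \<le> CARD('a)"
    using q2 by (intro degree_diff_le) (auto simp: degree_monom_le)
  have "coeff [:0, 1::'a:] (CARD('a)) = 0" using q2 by (simp add: coeff_eq_0)
  hence coeffR: "coeff ?R (CARD('a)) = 1" by simp
  show ?thesis
  proof (rule poly_eqI_degree_lead_coeff[where n = "CARD('a)" and A = UNIV])
    show "coeff ?L (CARD('a)) = coeff ?R (CARD('a))" using lcL degL coeffR by simp
    show "CARD('a) \<le> card (UNIV :: 'a set)" by simp
    show "degree ?L \<le> CARD('a)" using degL by simp
    show "degree ?R \<le> CARD('a)" using degR .
    fix z :: 'a
    have "poly ?L z = (\<Prod>a\<in>UNIV. z - a)" by (simp add: poly_prod)
    also have "\<dots> = 0" by (rule prod_zero) auto
    finally show "poly ?L z = poly ?R z" by (simp add: poly_monom ff_power_card)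
  qed
qed

lemma power_card_minus_prod:
  fixes x :: "'a::{finite,field} poly"
  shows "x ^ CARD('a) - x = (\<Prod>a\<in>UNIV. x - [:a:])"
proof -
  let ?h = "map_poly (\<lambda>a::'a. [:a:])"
  have hh: "hl ?h" by (rule hl_map_poly[OF hl_const_poly])
  have e1: "?h (\<Prod>a\<in>(UNIV::'a set). [:-a, 1:]) = (\<Prod>a\<in>UNIV. ?h [:-a, 1:])"
    by (rule hl_prod[OF hh])
  have e2: "poly (?h [:-a, 1:]) x = x - [:a:]" for a :: 'a
    by (simp add: map_poly_pCons)
  have "poly (?h (\<Prod>a\<in>(UNIV::'a set). [:-a, 1:])) x = (\<Prod>a\<in>UNIV. x - [:a:])"
    unfolding e1 poly_prod e2 ..
  moreover have "?h (monom 1 CARD('a) - [:0, 1:]) = monom 1 CARD('a) - [:0, 1:]"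
    unfolding hl_diff[OF hh] by (simp add: map_poly_monom map_poly_pCons one_pCons[symmetric])
  moreover have "poly (monom 1 CARD('a) - [:0, 1:]) x = x ^ CARD('a) - x"
    by (simp add: poly_monom)
  ultimately show ?thesis using prod_linear_ff[where 'a='a] by simp
qed

lemma frob_fixed_const:
  fixes Pr x :: "'a::{finite,field} poly"
  assumes irr: "irreducible Pr" and c: "[x ^ CARD('a) = x] (mod Pr)"
  shows "x mod Pr = [:coeff (x mod Pr) 0:]"
proof -
  have "Pr dvd x ^ CARD('a) - x" using c by (simp add: cong_iff_dvd_diff)
  hence "Pr dvd (\<Prod>a\<in>UNIV. x - [:a:])" unfolding power_card_minus_prod .
  from irr_dvd_prod[OF irr finite_class.finite_UNIV this] obtain a where "Pr dvd x - [:a:]" by blast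
  hence "[x = [:a:]] (mod Pr)" by (simp only: cong_iff_dvd_diff)
  hence "x mod Pr = [:a:] mod Pr" by (simp only: cong_def)
  also have "degree [:a:] < degree Pr" using irr_deg_pos[OF irr] by simp
  hence "[:a:] mod Pr = [:a:]" by (rule mod_poly_less)
  finally show ?thesis by simp
qed

section \<open>Norms\<close>

definition Nf :: "nat \<Rightarrow> 'a::{finite,field} poly poly \<Rightarrow> 'a poly poly" where
  "Nf d Q = (\<Prod>k<d. FF k Q)"

definition Nr :: "'a::{finite,field} poly \<Rightarrow> 'a poly poly \<Rightarrow> 'a poly poly" where
  "Nr Pr Q = (\<Prod>k<degree Pr. frob_red Pr k Q)"

definition red :: "'a::field poly \<Rightarrow> 'a poly poly \<Rightarrow> 'a poly" where
  "red Pr A = map_poly (\<lambda>c. coeff (c mod Pr) 0) A"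

lemma Qd_red: "Qd Pr n P = red Pr (Nr Pr (twistQ P n))"
  unfolding Qd_def Qd_res_def red_def Nr_def by (simp add: map_poly_map_poly o_def)

lemma red_cg: "cg Pr A B \<Longrightarrow> red Pr A = red Pr B"
  unfolding red_def by (intro poly_eqI) (simp add: cg_coeff coeff_map_poly cong_def)

lemma coeff_frob_red:
  fixes Pr :: "'a::{finite,field} poly"
  shows "coeff (frob_red Pr k Q) i = coeff Q i ^ (CARD('a) ^ k) mod Pr"
proof -
  have "CARD('a) ^ k \<noteq> 0" using zero_less_card_finite[where 'a='a] by simp
  hence "(0::'a poly) ^ (CARD('a) ^ k) mod Pr = 0" by (metis power_0_left mod_0)
  thus ?thesis unfolding frob_red_def by (simp add: coeff_map_poly)
qed

lemma cg_frob_red: "cg Pr (frob_red Pr k Q) (FF k Q)"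
  by (simp add: cg_coeff coeff_frob_red coeff_FF fr_def cong_def)

lemma cg_Nr_Nf: "cg Pr (Nr Pr Q) (Nf (degree Pr) Q)"
  unfolding Nr_def Nf_def by (intro cg_prod cg_frob_red)

lemma Nf_mult: "Nf d (A * B) = Nf d A * Nf d B"
  unfolding Nf_def by (simp add: hlD(4)[OF hl_FF] prod.distrib)

lemma Nf_one[simp]: "Nf d 1 = 1"
  unfolding Nf_def by (simp add: hlD(2)[OF hl_FF])

lemma Nf_prod: "Nf d (prod f S) = (\<Prod>s\<in>S. Nf d (f s))"
  by (induction S rule: infinite_finite_induct) (auto simp: Nf_mult)

lemma Nf_power: "Nf d (A ^ m) = Nf d A ^ m"
  by (induction m) (auto simp: Nf_mult)

lemma cyclic_shift:
  fixes g :: "nat \<Rightarrow> 'a::field poly poly" and d k :: nat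
  assumes "\<And>j. cg Pr (g (j + d)) (g j)"
  shows "cg Pr (\<Prod>j<d. g (j + k)) (\<Prod>j<d. g j)"
proof (induction k)
  case 0 then show ?case by simp
next
  case (Suc k)
  show ?case
  proof (cases d)
    case 0 then show ?thesis by simp
  next
    case (Suc d')
    define h where "h j = g (j + k)" for j
    have A: "(\<Prod>j<d. g (j + Suc k)) = (\<Prod>i<d'. h (Suc i)) * h (Suc d')"
      unfolding Suc h_def by (simp add: prod.lessThan_Suc)
    have B: "(\<Prod>j<d. g (j + k)) = h 0 * (\<Prod>i<d'. h (Suc i))"
      unfolding Suc h_def by (simp add: prod.lessThan_Suc_shift del: prod.lessThan_Suc)
    have "cg Pr (h (Suc d')) (h 0)" using assms[of k] Suc by (simp add: h_def add.commute)
    hence "cg Pr ((\<Prod>i<d'. h (Suc i)) * h (Suc d')) (h 0 * (\<Prod>i<d'. h (Suc i)))"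
      by (subst mult.commute) (intro cg_mult cg_refl)
    hence "cg Pr (\<Prod>j<d. g (j + Suc k)) (\<Prod>j<d. g (j + k))" using A B by simp
    thus ?thesis using Suc.IH by (rule cg_trans)
  qed
qed

lemma cg_FF_period:
  fixes Pr :: "'a::{finite,field} poly"
  assumes irr: "irreducible Pr"
  shows "cg Pr (FF (j + degree Pr) Q) (FF j Q)"
proof -
  have "cg Pr (FF (degree Pr) Q) Q"
    using fermat_poly[OF irr] by (simp add: cg_coeff coeff_FF fr_def)
  hence "cg Pr (FF j (FF (degree Pr) Q)) (FF j Q)" by (rule cg_FF)
  thus ?thesis by (simp add: FF_FF)
qed

lemma Nf_FF_cg:
  fixes Pr :: "'a::{finite,field} poly"
  assumes irr: "irreducible Pr"
  shows "cg Pr (Nf (degree Pr) (FF k Q)) (Nf (degree Pr) Q)"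
proof -
  have "Nf (degree Pr) (FF k Q) = (\<Prod>j<degree Pr. FF (j + k) Q)"
    unfolding Nf_def by (simp add: FF_FF)
  moreover have "cg Pr (\<Prod>j<degree Pr. FF (j + k) Q) (\<Prod>j<degree Pr. FF j Q)"
    by (rule cyclic_shift) (rule cg_FF_period[OF irr])
  ultimately show ?thesis unfolding Nf_def by simp
qed

lemma Nr_const:
  fixes Pr :: "'a::{finite,field} poly"
  assumes irr: "irreducible Pr"
  shows "coeff (Nr Pr Q) i mod Pr = [:coeff (coeff (Nr Pr Q) i mod Pr) 0:]"
proof -
  let ?M = "Nr Pr Q" and ?d = "degree Pr"
  have 1: "cg Pr (FF 1 ?M) (FF 1 (Nf ?d Q))" by (rule cg_FF[OF cg_Nr_Nf])
  have 2: "FF 1 (Nf ?d Q) = Nf ?d (FF 1 Q)"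
    unfolding Nf_def by (simp add: hl_prod[OF hl_FF] FF_FF add.commute)
  have 3: "cg Pr (Nf ?d (FF 1 Q)) (Nf ?d Q)" by (rule Nf_FF_cg[OF irr])
  have 4: "cg Pr (Nf ?d Q) ?M" by (rule cg_sym[OF cg_Nr_Nf])
  have "cg Pr (FF 1 ?M) ?M" using 1 2 3 4 by (metis cg_trans)
  hence "[coeff ?M i ^ CARD('a) = coeff ?M i] (mod Pr)"
    by (simp add: cg_coeff coeff_FF fr_def)
  thus ?thesis by (rule frob_fixed_const[OF irr])
qed


hide_const (open) module.smult

abbreviation mc :: "'a::comm_ring_1 poly \<Rightarrow> 'a poly poly" where
  "mc \<equiv> map_poly (\<lambda>a. [:a:])"

lemma hl_mc: "hl (mc :: 'a::comm_ring_1 poly \<Rightarrow> _)"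
  by (rule hl_map_poly[OF hl_const_poly])

section \<open>Transport\<close>

lemma transport:
  fixes Pr Pr' t :: "'a::{finite,field} poly"
  assumes irr: "irreducible Pr" and deg: "degree Pr' = degree Pr"
    and dv: "Pr dvd pcompose Pr' t"
    and inj: "\<And>z. degree z < degree Pr \<Longrightarrow> Pr dvd pcompose z t \<Longrightarrow> z = 0"
  shows "red Pr' (Nr Pr' Q') = red Pr (Nr Pr (map_poly (\<lambda>c. pcompose c t) Q'))"
proof -
  define \<phi> where "\<phi> c = pcompose c t" for c :: "'a poly"
  have h\<phi>: "hl \<phi>" unfolding \<phi>_def by (rule hl_pcompose)
  have dv': "Pr dvd \<phi> Pr'" using dv by (simp add: \<phi>_def)
  have \<phi>0: "\<phi> 0 = 0" by (simp add: \<phi>_def)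
  have \<phi>c: "\<phi> [:a:] = [:a:]" for a by (simp add: \<phi>_def)
  let ?M' = "Nr Pr' Q'" and ?M = "Nr Pr (map_poly \<phi> Q')" and ?d = "degree Pr"
  have dpos: "?d > 0" by (rule irr_deg_pos[OF irr])
  have Pr'0: "Pr' \<noteq> 0" using deg dpos by auto
  have frk: "cg Pr (map_poly \<phi> (frob_red Pr' k Q')) (frob_red Pr k (map_poly \<phi> Q'))" for k
  proof -
    have 1: "cg Pr (map_poly \<phi> (frob_red Pr' k Q')) (map_poly \<phi> (FF k Q'))"
      by (rule cg_map_hl[OF h\<phi> dv' cg_frob_red])
    have 2: "map_poly \<phi> (FF k Q') = FF k (map_poly \<phi> Q')"
      by (rule poly_eqI) (simp add: coeff_map_poly \<phi>0 coeff_FF fr_def hl_power[OF h\<phi>])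
    show ?thesis using 1 2 cg_sym[OF cg_frob_red] cg_trans by metis
  qed
  have mapM': "map_poly \<phi> ?M' = (\<Prod>k<?d. map_poly \<phi> (frob_red Pr' k Q'))"
    unfolding Nr_def deg by (rule hl_prod[OF hl_map_poly[OF h\<phi>]])
  have "cg Pr (\<Prod>k<?d. map_poly \<phi> (frob_red Pr' k Q')) ?M"
    unfolding Nr_def by (rule cg_prod) (rule frk)
  hence cgM: "cg Pr (map_poly \<phi> ?M') ?M" using mapM' by simp
  show ?thesis
  proof (rule poly_eqI)
    fix i
    define y where "y = coeff ?M' i mod Pr'"
    define a where "a = coeff (coeff ?M i mod Pr) 0"
    have Ma: "coeff ?M i mod Pr = [:a:]" unfolding a_def by (rule Nr_const[OF irr])
    have c1: "[\<phi> y = \<phi> (coeff ?M' i)] (mod Pr)"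
      by (rule hl_cong[OF h\<phi> dv']) (simp add: y_def)
    have c2: "\<phi> (coeff ?M' i) = coeff (map_poly \<phi> ?M') i" by (simp add: coeff_map_poly \<phi>0)
    have c3: "[coeff (map_poly \<phi> ?M') i = coeff ?M i] (mod Pr)" using cgM by (simp add: cg_coeff)
    have c4: "[coeff ?M i = [:a:]] (mod Pr)"
      using Ma mod_poly_less[of "[:a:]" Pr] dpos by (simp add: cong_def)
    have "[\<phi> y = \<phi> [:a:]] (mod Pr)" using c1 c2 c3 c4 \<phi>c by (metis cong_trans)
    hence "Pr dvd \<phi> (y - [:a:])" by (simp add: cong_iff_dvd_diff hl_diff[OF h\<phi>])
    moreover have "degree (y - [:a:]) < ?d"
    proof -
      have "degree y < ?d"
      proof (cases "y = 0")
        case True thus ?thesis using dpos by simp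
      next
        case False thus ?thesis using degree_mod_less'[OF Pr'0, of "coeff ?M' i"] deg
          by (simp add: y_def)
      qed
      thus ?thesis using dpos by (intro degree_diff_less) auto
    qed
    ultimately have "y - [:a:] = 0" using inj[of "y - [:a:]"] unfolding \<phi>_def by blast
    hence "y = [:a:]" by simp
    hence "coeff (red Pr' ?M') i = coeff (red Pr ?M) i"
      by (simp add: red_def coeff_map_poly y_def a_def)
    thus "coeff (red Pr' ?M') i = coeff (red Pr (Nr Pr (map_poly (\<lambda>c. pcompose c t) Q'))) i"
      unfolding \<phi>_def[abs_def] .
  qed
qed

definition lin :: "'a::field poly \<Rightarrow> 'a poly \<Rightarrow> 'a" where
  "lin Pr c = coeff (c mod Pr) 0"

lemma lin_add: "lin Pr (x + y) = lin Pr x + lin Pr y"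
  by (simp add: lin_def poly_mod_add_left)

lemma lin_0[simp]: "lin Pr 0 = 0" by (simp add: lin_def)

lemma lin_sum: "lin Pr (sum f S) = (\<Sum>s\<in>S. lin Pr (f s))"
  by (induction S rule: infinite_finite_induct) (auto simp: lin_add)

lemma lin_const_mult: "lin Pr (x * [:a:]) = lin Pr x * a"
proof -
  have "x * [:a:] = smult a x" by simp
  thus ?thesis by (simp add: lin_def mod_smult_left mult.commute)
qed

lemma lin_smult: "lin Pr (smult a x) = lin Pr x * a"
  by (simp add: lin_def mod_smult_left mult.commute)

lemma red_lin: "red Pr A = map_poly (lin Pr) A"
  unfolding red_def lin_def ..

lemma coeff_red: "coeff (red Pr A) i = lin Pr (coeff A i)"
  by (simp add: red_lin coeff_map_poly)

lemma red_add: "red Pr (A + B) = red Pr A + red Pr B"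
  by (rule poly_eqI) (simp add: coeff_red lin_add)

lemma red_mult_mc: "red Pr (A * mc r) = red Pr A * r"
proof (rule poly_eqI)
  fix k
  have "coeff (red Pr (A * mc r)) k = (\<Sum>i\<le>k. lin Pr (coeff A i * [:coeff r (k - i):]))"
    by (simp add: coeff_red coeff_mult lin_sum coeff_map_poly)
  also have "\<dots> = coeff (red Pr A * r) k"
    by (simp add: coeff_mult lin_smult coeff_red)
  finally show "coeff (red Pr (A * mc r)) k = coeff (red Pr A * r) k" .
qed

lemma red_const: "red Pr [:c:] = [:lin Pr c:]"
  by (rule poly_eqI) (simp add: coeff_red coeff_pCons split: nat.splits)

lemma red_pcompose_mc: "red Pr (pcompose A (mc r)) = pcompose (red Pr A) r"
proof (induction A)
  case 0 then show ?case by (simp add: red_lin)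
next
  case (pCons a A)
  have "red Pr (pCons a A) = pCons (lin Pr a) (red Pr A)"
    by (rule poly_eqI) (simp add: coeff_red coeff_pCons split: nat.splits)
  then show ?case using pCons
    by (simp add: pcompose_pCons red_add red_const mult.commute[of "mc r"] red_mult_mc)
qed

lemma FF_pcompose_mc: "FF k (pcompose X (mc r)) = pcompose (FF k X) (mc r)"
  unfolding FF_def
  by (simp add: map_poly_pcompose_hl[OF hl_fr] FF_constpoly[unfolded FF_def])

lemma Nf_pcompose_mc: "Nf d (pcompose X (mc r)) = pcompose (Nf d X) (mc r)"
  unfolding Nf_def by (simp add: FF_pcompose_mc pcompose_prod)

lemma Nf_mc: "Nf d (mc s :: 'a::{finite,field} poly poly) = mc (s ^ d)"
  unfolding Nf_def by (simp add: FF_constpoly hl_power[OF hl_mc])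

lemma red_Nr_subst:
  fixes Pr :: "'a::{finite,field} poly"
  shows "red Pr (Nr Pr (pcompose X (mc r) * mc s)) = pcompose (red Pr (Nr Pr X)) r * s ^ degree Pr"
proof -
  let ?d = "degree Pr"
  have "red Pr (Nr Pr (pcompose X (mc r) * mc s)) = red Pr (Nf ?d (pcompose X (mc r) * mc s))"
    by (rule red_cg[OF cg_Nr_Nf])
  also have "Nf ?d (pcompose X (mc r) * mc s) = pcompose (Nf ?d X) (mc r) * mc (s ^ ?d)"
    by (simp add: Nf_mult Nf_pcompose_mc Nf_mc)
  also have "red Pr \<dots> = pcompose (red Pr (Nf ?d X)) r * s ^ ?d"
    by (simp add: red_mult_mc red_pcompose_mc)
  also have "red Pr (Nf ?d X) = red Pr (Nr Pr X)"
    by (rule red_cg[OF cg_sym[OF cg_Nr_Nf]])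
  finally show ?thesis .
qed


lemma hl_cf: "hl (constfr :: 'a::field \<Rightarrow> 'a poly fract)"
  unfolding hl_def constfr_def
  by (auto simp: Zero_fract_def One_fract_def one_pCons mult.commute)

lemma map_twist:
  fixes \<phi> :: "'a::field poly \<Rightarrow> 'a poly"
  assumes h: "hl \<phi>"
  shows "map_poly \<phi> (twistQ P n) = [:\<phi> P:] * [:- \<phi> [:0, 1:], 1:] ^ n"
proof -
  have l: "map_poly \<phi> [:c, 1:] = [:\<phi> c, 1:]" for c
    by (rule poly_eqI) (simp add: coeff_map_poly hlD(1,2)[OF h] coeff_pCons split: nat.split)
  show ?thesis unfolding twistQ_def map_poly_mult_hl[OF h] hl_power[OF hl_map_poly[OF h]]
      map_poly_const_hl[OF h] l hl_uminus[OF h] ..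
qed

lemma pcompose_power: "pcompose (p ^ n) q = pcompose p q ^ n"
  by (induction n) (simp_all add: pcompose_mult pcompose_1)

lemma pcompose_twist:
  "pcompose (twistQ P n) R = [:P:] * ([:- [:0, 1:]:] + R) ^ n"
proof -
  have l: "pcompose [:c, 1:] R = [:c:] + R" for c :: "'a poly"
    by (simp add: pcompose_pCons)
  show ?thesis unfolding twistQ_def pcompose_mult pcompose_power pcompose_const l ..
qed

lemma mc_const: "mc [:a:] = [:[:a:]:]"
  by (rule map_poly_const_hl[OF hl_const_poly])

lemma mc_lin: "mc [:b, c:] = [:[:b:], [:c:]:]"
  by (simp add: map_poly_pCons)

lemma Qd_shift:
  fixes Pr P :: "'a::{finite,field} poly"
  assumes irr: "irreducible Pr"
  shows "Qd (pcompose Pr [:b, 1:]) n (pcompose P [:b, 1:]) = pcompose (Qd Pr n P) [:b, 1:]"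
proof -
  let ?t = "[:-b, 1:]" and ?Pr' = "pcompose Pr [:b, 1:]" and ?P' = "pcompose P [:b, 1:]"
  have comp: "pcompose [:b, 1:] ?t = [:0, 1:]" by (simp add: pcompose_pCons)
  have deg: "degree ?Pr' = degree Pr" by (simp add: degree_pcompose)
  have dv: "Pr dvd pcompose ?Pr' ?t" by (simp add: comp flip: pcompose_assoc)
  have inj: "z = 0" if "degree z < degree Pr" "Pr dvd pcompose z ?t" for z
  proof -
    have "degree (pcompose z ?t) < degree Pr" using that(1) by (simp add: degree_pcompose)
    hence "pcompose z ?t = 0" using small_dvd_zero that(2) by blast
    thus "z = 0" using pcompose_eq_0[of z ?t] by simp
  qed
  have P': "pcompose ?P' ?t = P" by (simp add: comp flip: pcompose_assoc)
  have th: "pcompose [:0, 1:] ?t = ?t" by (simp add: pcompose_pCons)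
  have "map_poly (\<lambda>c. pcompose c ?t) (twistQ ?P' n) = [:P:] * [:- ?t, 1:] ^ n"
    unfolding map_twist[OF hl_pcompose] P' th ..
  also have "[:- ?t, 1:] = [:- [:0, 1:]:] + mc [:b, 1:]"
    by (rule poly_eqI) (simp add: coeff_pCons coeff_map_poly split: nat.split)
  also have "[:P:] * ([:- [:0, 1:]:] + mc [:b, 1:]) ^ n = pcompose (twistQ P n) (mc [:b, 1:]) * mc 1"
    unfolding pcompose_twist by simp
  finally have e: "map_poly (\<lambda>c. pcompose c ?t) (twistQ ?P' n) = pcompose (twistQ P n) (mc [:b, 1:]) * mc 1" .
  have "Qd ?Pr' n ?P' = red ?Pr' (Nr ?Pr' (twistQ ?P' n))" by (rule Qd_red)
  also have "\<dots> = red Pr (Nr Pr (map_poly (\<lambda>c. pcompose c ?t) (twistQ ?P' n)))"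
    by (rule transport[OF irr deg dv inj])
  also have "\<dots> = pcompose (Qd Pr n P) [:b, 1:]"
    unfolding e red_Nr_subst Qd_red by simp
  finally show ?thesis .
qed


lemma Qd_scale:
  fixes Pr P :: "'a::{finite,field} poly"
  assumes irr: "irreducible Pr" and c: "c \<noteq> 0"
  shows "Qd (pcompose Pr [:0, c:]) n (pcompose P [:0, c:])
         = pcompose (Qd Pr n P) [:0, c:] * [:inverse c ^ n:] ^ degree Pr"
proof -
  let ?t = "[:0, inverse c:]" and ?Pr' = "pcompose Pr [:0, c:]" and ?P' = "pcompose P [:0, c:]"
  have comp: "pcompose [:0, c:] ?t = [:0, 1:]" using c by (simp add: pcompose_pCons)
  have deg: "degree ?Pr' = degree Pr" using c by (simp add: degree_pcompose)
  have dv: "Pr dvd pcompose ?Pr' ?t" by (simp add: comp flip: pcompose_assoc)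
  have inj: "z = 0" if "degree z < degree Pr" "Pr dvd pcompose z ?t" for z
  proof -
    have "degree (pcompose z ?t) < degree Pr" using that(1) c by (simp add: degree_pcompose)
    hence "pcompose z ?t = 0" using small_dvd_zero that(2) by blast
    thus "z = 0" using pcompose_eq_0[of z ?t] c by simp
  qed
  have P': "pcompose ?P' ?t = P" by (simp add: comp flip: pcompose_assoc)
  have th: "pcompose [:0, 1:] ?t = ?t" by (simp add: pcompose_pCons)
  have "map_poly (\<lambda>c. pcompose c ?t) (twistQ ?P' n) = [:P:] * [:- ?t, 1:] ^ n"
    unfolding map_twist[OF hl_pcompose] P' th ..
  also have "[:- ?t, 1:] = ([:- [:0, 1:]:] + mc [:0, c:]) * mc [:inverse c:]"
    using c by (simp add: mc_const mc_lin)
  also have "[:P:] * (([:- [:0, 1:]:] + mc [:0, c:]) * mc [:inverse c:]) ^ n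
      = pcompose (twistQ P n) (mc [:0, c:]) * mc ([:inverse c:] ^ n)"
    unfolding pcompose_twist hl_power[OF hl_mc] by (simp add: power_mult_distrib)
  finally have e: "map_poly (\<lambda>c. pcompose c ?t) (twistQ ?P' n)
      = pcompose (twistQ P n) (mc [:0, c:]) * mc ([:inverse c:] ^ n)" .
  have "Qd ?Pr' n ?P' = red ?Pr' (Nr ?Pr' (twistQ ?P' n))" by (rule Qd_red)
  also have "\<dots> = red Pr (Nr Pr (map_poly (\<lambda>c. pcompose c ?t) (twistQ ?P' n)))"
    by (rule transport[OF irr deg dv inj])
  also have "\<dots> = pcompose (Qd Pr n P) [:0, c:] * [:inverse c ^ n:] ^ degree Pr"
    unfolding e red_Nr_subst Qd_red by (simp add: poly_const_pow)
  finally show ?thesis .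
qed

lemma Qd_smult:
  fixes Pr P :: "'a::{finite,field} poly"
  shows "Qd Pr n (smult a P) = Qd Pr n P * [:a:] ^ degree Pr"
proof -
  have m: "mc [:0, 1:] = [:0, 1:]"
    by (rule poly_eqI) (simp add: coeff_pCons coeff_map_poly split: nat.split)
  have "[:smult a P:] = [:P:] * [:[:a:]:]" by simp
  hence e: "twistQ (smult a P) n = pcompose (twistQ P n) (mc [:0, 1:]) * mc [:a:]"
    unfolding m pcompose_idR mc_const twistQ_def by (simp only: ac_simps)
  show ?thesis unfolding Qd_red e red_Nr_subst by (simp add: pcompose_idR)
qed

lemma Qd_frob:
  fixes Pr P :: "'a::{finite,field} poly"
  assumes irr: "irreducible Pr"
  shows "Qd Pr (CARD('a) ^ k * n) P = pcompose (Qd Pr n P) (monom 1 (CARD('a) ^ k))"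
proof -
  let ?N = "CARD('a) ^ k" and ?d = "degree Pr"
  let ?S = "[:- [:0, 1:], 1:] :: 'a poly poly"
  have M: "mc (monom 1 ?N) = (monom 1 ?N :: 'a poly poly)"
    by (simp add: map_poly_monom one_pCons[symmetric])
  have "?S ^ ?N = ([:- [:0, 1:]:] + monom 1 1) ^ ?N"
    by (simp add: monom_Suc one_pCons[symmetric])
  also have "\<dots> = [:- [:0, 1:]:] ^ ?N + monom 1 1 ^ ?N"
    by (rule freshman_card) simp
  also have "\<dots> = pcompose (FF k ?S) (monom 1 ?N)"
  proof -
    have "FF k ?S = [:fr k (- [:0, 1:]), 1:]"
      by (rule poly_eqI) (simp add: coeff_FF coeff_pCons fr_def split: nat.split)
    thus ?thesis by (simp add: pcompose_pCons poly_const_pow fr_def monom_power)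
  qed
  finally have S: "?S ^ ?N = pcompose (FF k ?S) (monom 1 ?N)" .
  have e: "twistQ P (?N * n) = pcompose ([:P:] * FF k (?S ^ n)) (mc (monom 1 ?N))"
    unfolding twistQ_def power_mult S M pcompose_mult pcompose_const pcompose_power
      hl_power[OF hl_FF] ..
  have cg1: "cg Pr (Nf ?d ([:P:] * FF k (?S ^ n))) (Nf ?d (twistQ P n))"
    unfolding twistQ_def Nf_mult by (intro cg_mult cg_refl Nf_FF_cg[OF irr])
  have "Qd Pr (?N * n) P = red Pr (Nf ?d (twistQ P (?N * n)))"
    unfolding Qd_red by (rule red_cg[OF cg_Nr_Nf])
  also have "\<dots> = red Pr (pcompose (Nf ?d ([:P:] * FF k (?S ^ n))) (mc (monom 1 ?N)))"
    unfolding e Nf_pcompose_mc ..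
  also have "\<dots> = red Pr (pcompose (Nf ?d (twistQ P n)) (mc (monom 1 ?N)))"
    by (rule red_cg[OF cg_pcompose[OF cg1]])
  also have "\<dots> = pcompose (red Pr (Nf ?d (twistQ P n))) (monom 1 ?N)"
    by (rule red_pcompose_mc)
  also have "red Pr (Nf ?d (twistQ P n)) = Qd Pr n P"
    unfolding Qd_red by (rule red_cg[OF cg_sym[OF cg_Nr_Nf]])
  finally show ?thesis by (simp add: mult.commute)
qed


definition ev :: "'a::field poly \<Rightarrow> 'a poly fract \<Rightarrow> 'a poly fract" where
  "ev Q x = poly (map_poly constfr Q) x"

lemma ev_mult: "ev (A * B) x = ev A x * ev B x"
  by (simp add: ev_def map_poly_mult_hl[OF hl_cf])

lemma ev_power: "ev (A ^ j) x = ev A x ^ j"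
  by (simp add: ev_def hl_power[OF hl_map_poly[OF hl_cf]] poly_power)

lemma ev_const: "ev [:a:] x = constfr a"
  by (simp add: ev_def map_poly_const_hl[OF hl_cf])

lemma ev_pcompose: "ev (pcompose A r) x = ev A (ev r x)"
  by (simp add: ev_def map_poly_pcompose_hl[OF hl_cf] poly_pcompose)

lemma ev_lin: "ev [:b, 1:] x = constfr b + x"
  by (simp add: ev_def map_poly_pCons hlD(1,2)[OF hl_cf])

lemma ev_lin0: "ev [:0, c:] x = constfr c * x"
  by (simp add: ev_def map_poly_pCons hlD(1,2)[OF hl_cf])

lemma ev_monom: "ev (monom 1 N) x = x ^ N"
  by (simp add: ev_def map_poly_monom hlD(1,2)[OF hl_cf] poly_monom)

lemma cf_mult: "constfr a * constfr b = constfr (a * b)"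
  by (simp add: hlD(4)[OF hl_cf])

lemma cf_power: "constfr a ^ k = constfr (a ^ k)"
  by (simp add: hl_power[OF hl_cf])

lemma cf_1: "constfr 1 = 1" by (simp add: hlD(2)[OF hl_cf])

lemma Lsub_eqI:
  fixes Pr Pr' :: "'a::{finite,field} poly"
  assumes deg: "degree Pr' = degree Pr"
    and h: "\<And>j. ev (Qd Pr' n' P' ^ j) f' * g' ^ (degree Pr * j) = ev (Qd Pr n P ^ j) f * g ^ (degree Pr * j)"
  shows "Lsub Pr' n' P' f' g' = Lsub Pr n P f g"
proof (rule fps_ext)
  fix i
  let ?d = "degree Pr"
  show "fps_nth (Lsub Pr' n' P' f' g') i = fps_nth (Lsub Pr n P f g) i"
  proof (cases "?d dvd i")
    case True
    define j where "j = i div ?d"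
    have i: "i = ?d * j" unfolding j_def using True by simp
    have "i div ?d = j" by (simp add: j_def)
    thus ?thesis using h[of j] True deg unfolding i
      by (simp add: Lsub_def fps_subst_TU_def Lfac_def ev_def)
  next
    case False
    thus ?thesis using deg by (simp add: Lsub_def fps_subst_TU_def Lfac_def)
  qed
qed

lemma claim1:
  fixes Pr P :: "'a::{finite,field} poly"
  assumes irr: "irreducible Pr"
  shows "Lsub (pcompose Pr [:b, 1:]) n (pcompose P [:b, 1:]) (Tfr - constfr b) 1 = Lsub Pr n P Tfr 1"
proof (rule Lsub_eqI)
  show "degree (pcompose Pr [:b, 1:]) = degree Pr" by (simp add: degree_pcompose)
  fix j
  show "ev (Qd (pcompose Pr [:b, 1:]) n (pcompose P [:b, 1:]) ^ j) (Tfr - constfr b) * 1 ^ (degree Pr * j)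
      = ev (Qd Pr n P ^ j) Tfr * 1 ^ (degree Pr * j)"
    by (simp add: Qd_shift[OF irr] ev_power ev_pcompose ev_lin)
qed

lemma claim2:
  fixes Pr P :: "'a::{finite,field} poly"
  assumes irr: "irreducible Pr" and c: "c \<noteq> 0"
  shows "Lsub (pcompose Pr [:0, c:]) n (pcompose P [:0, c:]) (constfr (inverse c) * Tfr) (constfr (c ^ n))
         = Lsub Pr n P Tfr 1"
proof (rule Lsub_eqI)
  show "degree (pcompose Pr [:0, c:]) = degree Pr" using c by (simp add: degree_pcompose)
  fix j
  let ?d = "degree Pr"
  have 1: "constfr c * (constfr (inverse c) * Tfr) = Tfr"
    using c by (simp add: mult.assoc[symmetric] cf_mult cf_1)
  have 2: "constfr ((inverse c ^ n) ^ ?d) ^ j * constfr (c ^ n) ^ (?d * j) = 1"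
  proof -
    have "constfr ((inverse c ^ n) ^ ?d) ^ j * constfr (c ^ n) ^ (?d * j)
        = constfr (((inverse c ^ n) ^ ?d) ^ j * (c ^ n) ^ (?d * j))"
      by (simp add: cf_power cf_mult)
    also have "((inverse c ^ n) ^ ?d) ^ j * (c ^ n) ^ (?d * j) = (inverse c * c) ^ (n * ?d * j)"
      by (simp add: power_mult_distrib flip: power_mult) (simp add: mult.assoc)
    also have "\<dots> = 1" using c by simp
    finally show ?thesis by (simp add: cf_1)
  qed
  show "ev (Qd (pcompose Pr [:0, c:]) n (pcompose P [:0, c:]) ^ j) (constfr (inverse c) * Tfr)
        * constfr (c ^ n) ^ (?d * j) = ev (Qd Pr n P ^ j) Tfr * 1 ^ (?d * j)"
    unfolding Qd_scale[OF irr c] ev_power ev_mult ev_pcompose ev_lin0 1 poly_const_pow ev_const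
    using 2 by (simp add: power_mult_distrib mult.assoc)
qed

lemma claim4:
  fixes Pr P :: "'a::{finite,field} poly"
  assumes e: "e \<noteq> 0"
  shows "Lsub Pr n (smult (inverse e) P) Tfr (constfr e) = Lsub Pr n P Tfr 1"
proof (rule Lsub_eqI)
  show "degree Pr = degree Pr" ..
  fix j
  let ?d = "degree Pr"
  have 2: "constfr (inverse e ^ ?d) ^ j * constfr e ^ (?d * j) = 1"
  proof -
    have "constfr (inverse e ^ ?d) ^ j * constfr e ^ (?d * j) = constfr ((inverse e ^ ?d) ^ j * e ^ (?d * j))"
      by (simp add: cf_power cf_mult)
    also have "(inverse e ^ ?d) ^ j * e ^ (?d * j) = (inverse e * e) ^ (?d * j)"
      by (simp add: power_mult_distrib flip: power_mult)
    also have "\<dots> = 1" using e by simp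
    finally show ?thesis by (simp add: cf_1)
  qed
  show "ev (Qd Pr n (smult (inverse e) P) ^ j) Tfr * constfr e ^ (?d * j) = ev (Qd Pr n P ^ j) Tfr * 1 ^ (?d * j)"
    unfolding Qd_smult ev_power ev_mult poly_const_pow ev_const
    using 2 by (simp add: power_mult_distrib mult.assoc)
qed

lemma claim5:
  fixes Pr P :: "'a::{finite,field} poly"
  assumes irr: "irreducible Pr"
  shows "Lsub Pr (CARD('a) ^ k * n) P Tfr 1 = Lsub Pr n P (Tfr ^ (CARD('a) ^ k)) 1"
proof (rule Lsub_eqI)
  show "degree Pr = degree Pr" ..
  fix j
  show "ev (Qd Pr (CARD('a) ^ k * n) P ^ j) Tfr * 1 ^ (degree Pr * j)
      = ev (Qd Pr n P ^ j) (Tfr ^ CARD('a) ^ k) * 1 ^ (degree Pr * j)"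
    by (simp add: Qd_frob[OF irr] ev_power ev_pcompose ev_monom)
qed


definition revp :: "nat \<Rightarrow> 'b::comm_ring_1 poly \<Rightarrow> 'b poly" where
  "revp N A = (\<Sum>i\<le>N. monom (coeff A i) (N - i))"

lemma coeff_revp: "coeff (revp N A) k = (if k \<le> N then coeff A (N - k) else 0)"
proof -
  have "coeff (revp N A) k = (\<Sum>i\<le>N. if N - i = k then coeff A i else 0)"
    by (simp add: revp_def coeff_sum coeff_monom)
  also have "\<dots> = (\<Sum>i\<le>N. if i = N - k then (if k \<le> N then coeff A i else 0) else 0)"
    by (intro sum.cong refl) auto
  also have "\<dots> = (if k \<le> N then coeff A (N - k) else 0)"
    by (simp add: sum.delta')
  finally show ?thesis .
qed

lemma revp_0[simp]: "revp N 0 = 0"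
  by (rule poly_eqI) (simp add: coeff_revp)

lemma degree_revp: "degree (revp N A) \<le> N"
  by (rule degree_le) (simp add: coeff_revp)

lemma revp_revp: "degree A \<le> N \<Longrightarrow> revp N (revp N A) = A"
  by (rule poly_eqI) (auto simp: coeff_revp coeff_eq_0)

lemma revp_map: "f 0 = 0 \<Longrightarrow> map_poly f (revp N A) = revp N (map_poly f A)"
  by (rule poly_eqI) (simp add: coeff_revp coeff_map_poly)

lemma iota_revp:
  fixes P :: "'a::field poly"
  assumes "degree P \<le> M" shows "iota M P = revp M P"
proof -
  have "revp M P = (\<Sum>i\<le>degree P. monom (coeff P i) (M - i))"
    unfolding revp_def
    by (rule sum.mono_neutral_right) (auto simp: assms coeff_eq_0)
  thus ?thesis by (simp add: iota_def)
qed

lemma revp_reflect: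
  fixes A :: "'b::comm_ring_1 poly"
  assumes "degree A \<le> N"
  shows "revp N A = monom 1 (N - degree A) * reflect_poly A"
proof (rule poly_eqI)
  fix k
  show "coeff (revp N A) k = coeff (monom 1 (N - degree A) * reflect_poly A) k"
  proof (cases "k < N - degree A")
    case True
    hence "coeff A (N - k) = 0" by (intro coeff_eq_0) linarith
    thus ?thesis using True by (simp add: coeff_revp coeff_monom_mult)
  next
    case False
    show ?thesis
    proof (cases "k \<le> N")
      case True
      have "degree A - (k - (N - degree A)) = N - k" using assms True False by linarith
      thus ?thesis using True False assms by (simp add: coeff_revp coeff_monom_mult coeff_reflect_poly)
    next
      case False2: False
      thus ?thesis using False assms by (simp add: coeff_revp coeff_monom_mult coeff_reflect_poly)
    qed
  qed
qed

lemma revp_mult: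
  fixes A B :: "'b::idom poly"
  assumes "degree A \<le> a" "degree B \<le> b"
  shows "revp (a + b) (A * B) = revp a A * revp b B"
proof (cases "A = 0 \<or> B = 0")
  case True thus ?thesis by auto
next
  case False
  have dAB: "degree (A * B) = degree A + degree B" using False by (simp add: degree_mult_eq)
  have "revp (a + b) (A * B) = monom 1 (a + b - degree (A * B)) * reflect_poly (A * B)"
    using assms dAB by (intro revp_reflect) simp
  also have "\<dots> = (monom 1 (a - degree A) * reflect_poly A) * (monom 1 (b - degree B) * reflect_poly B)"
  proof -
    have "a + b - degree (A * B) = (a - degree A) + (b - degree B)" using assms dAB by simp
    thus ?thesis by (simp add: reflect_poly_mult mult_monom ac_simps)
  qed
  also have "\<dots> = revp a A * revp b B" using assms by (simp add: revp_reflect)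
  finally show ?thesis .
qed

lemma revp_power:
  fixes A :: "'b::idom poly"
  assumes "degree A \<le> a"
  shows "revp (a * n) (A ^ n) = revp a A ^ n"
proof (induction n)
  case 0 show ?case by (rule poly_eqI) (simp add: coeff_revp)
next
  case (Suc n)
  have "revp (a * Suc n) (A ^ Suc n) = revp (a + a * n) (A * A ^ n)" by simp
  also have "\<dots> = revp a A * revp (a * n) (A ^ n)"
    by (rule revp_mult[OF assms]) (rule order.trans[OF degree_power_le], simp add: assms mult.commute)
  finally show ?case using Suc by simp
qed

lemma degree_prod_le_N:
  fixes F :: "nat \<Rightarrow> 'b::idom poly"
  assumes "\<And>k. k < d \<Longrightarrow> degree (F k) \<le> N"
  shows "degree (\<Prod>k<d. F k) \<le> N * d"
  using assms
proof (induction d)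
  case 0 then show ?case by simp
next
  case (Suc d)
  have "degree (\<Prod>k<Suc d. F k) \<le> degree (\<Prod>k<d. F k) + degree (F d)"
    by (simp add: degree_mult_le)
  also have "\<dots> \<le> N * d + N" using Suc by (intro add_mono) auto
  finally show ?case by simp
qed

lemma revp_prod:
  fixes F :: "nat \<Rightarrow> 'b::idom poly"
  assumes "\<And>k. k < d \<Longrightarrow> degree (F k) \<le> N"
  shows "revp (N * d) (\<Prod>k<d. F k) = (\<Prod>k<d. revp N (F k))"
  using assms
proof (induction d)
  case 0 show ?case by (rule poly_eqI) (simp add: coeff_revp)
next
  case (Suc d)
  have e: "N * Suc d = N * d + N" by simp
  have "revp (N * Suc d) (\<Prod>k<Suc d. F k) = revp (N * d + N) ((\<Prod>k<d. F k) * F d)"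
    by (simp only: e prod.lessThan_Suc)
  also have "\<dots> = revp (N * d) (\<Prod>k<d. F k) * revp N (F d)"
    using Suc.prems by (intro revp_mult degree_prod_le_N) auto
  finally show ?case using Suc by simp
qed

lemma poly_bound:
  fixes B :: "'b::comm_ring_1 poly"
  assumes "degree B \<le> N" shows "poly B x = (\<Sum>i\<le>N. coeff B i * x ^ i)"
  unfolding poly_altdef by (rule sum.mono_neutral_left) (auto simp: assms coeff_eq_0)

lemma poly_revp:
  fixes B :: "'b::field poly"
  assumes x: "x \<noteq> 0" and d: "degree B \<le> N"
  shows "poly (revp N B) (inverse x) = inverse x ^ N * poly B x"
proof -
  have "poly (revp N B) (inverse x) = (\<Sum>k\<le>N. coeff B (N - k) * inverse x ^ k)"
    by (subst poly_bound[OF degree_revp]) (simp add: coeff_revp)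
  also have "\<dots> = (\<Sum>i\<le>N. coeff B i * inverse x ^ (N - i))"
    by (rule sum.reindex_bij_witness[where i = "\<lambda>i. N - i" and j = "\<lambda>k. N - k"]) auto
  also have "\<dots> = (\<Sum>i\<le>N. inverse x ^ N * (coeff B i * x ^ i))"
  proof (intro sum.cong refl)
    fix i assume "i \<in> {..N}"
    hence "N = (N - i) + i" by simp
    hence "inverse x ^ N = inverse x ^ (N - i) * inverse x ^ i" by (metis power_add)
    hence "inverse x ^ N * x ^ i = inverse x ^ (N - i) * (inverse x * x) ^ i"
      by (simp add: power_mult_distrib mult.assoc)
    hence "inverse x ^ N * x ^ i = inverse x ^ (N - i)" using x by simp
    thus "coeff B i * inverse x ^ (N - i) = inverse x ^ N * (coeff B i * x ^ i)"
      by (metis mult.left_commute)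
  qed
  also have "\<dots> = inverse x ^ N * poly B x"
    by (simp add: sum_distrib_left poly_bound[OF d])
  finally show ?thesis .
qed


definition TH :: "'a::field poly" where "TH = [:0, 1:]"

context
  fixes Pr :: "'a::{finite,field} poly"
  assumes irr: "irreducible Pr" and na: "\<not> (Pr dvd [:0, 1:] \<and> [:0, 1:] dvd Pr)"
begin

lemma Pr_ndvd_theta: "\<not> Pr dvd [:0, 1:]"
proof
  assume "Pr dvd [:0, 1:]"
  then obtain u where u: "[:0, 1:] = Pr * u" by (elim dvdE)
  have "irreducible ([:0, 1:] :: 'a poly)" by (rule irreducible_linear_field_poly) simp
  from irreducibleD[OF this u] have "is_unit Pr \<or> is_unit u" .
  moreover have "\<not> is_unit Pr" using irr by (auto simp: irreducible_def)
  ultimately have "is_unit u" by blast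
  hence "[:0, 1:] dvd Pr" using u mult_unit_dvd_iff[of u Pr Pr] by simp
  thus False using na \<open>Pr dvd [:0, 1:]\<close> by blast
qed

lemma theta_ndvd_Pr: "\<not> [:0, 1:] dvd Pr"
proof
  assume "[:0, 1:] dvd Pr"
  then obtain u where u: "Pr = [:0, 1:] * u" by (elim dvdE)
  from irreducibleD[OF irr u] have "is_unit ([:0, 1::'a:]) \<or> is_unit u" .
  moreover have "\<not> is_unit ([:0, 1::'a:])" by (simp add: is_unit_poly_iff)
  ultimately have "is_unit u" by blast
  hence "Pr dvd [:0, 1:]" using u mult_unit_dvd_iff[of u "[:0, 1:]" "[:0, 1:]"] by simp
  thus False using na \<open>[:0, 1:] dvd Pr\<close> by blast
qed

lemma coeff_Pr_0: "coeff Pr 0 \<noteq> 0"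
  using theta_ndvd_Pr dvd_iff_poly_eq_0[of 0 Pr] by (simp add: poly_0_coeff_0)

lemma Pr_ndvd_theta_pow: "\<not> Pr dvd [:0, 1:] ^ k"
  using Pr_ndvd_theta prime_elem_dvd_power[OF irr_prime_elem[OF irr]] by blast

definition EE :: nat where "EE = CARD('a) ^ degree Pr - 2"

definition tt :: "'a poly" where "tt = TH ^ EE"

lemma qd_ge2: "CARD('a) ^ degree Pr \<ge> 2"
proof -
  have "CARD('a) ^ 1 \<le> CARD('a) ^ degree Pr"
    using irr_deg_pos[OF irr] card_ge2[where 'a='a] by (intro power_increasing) auto
  thus ?thesis using card_ge2[where 'a='a] by simp
qed

lemma theta_tt: "[TH * tt = 1] (mod Pr)"
proof -
  let ?x = "TH :: 'a poly"
  have e: "CARD('a) ^ degree Pr = Suc (Suc EE)" using qd_ge2 by (simp add: EE_def)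
  have "[?x ^ (CARD('a) ^ degree Pr) = ?x] (mod Pr)" by (rule fermat_poly[OF irr])
  moreover have "?x ^ (CARD('a) ^ degree Pr) = ?x * (?x * tt)" unfolding e tt_def by simp
  ultimately have "Pr dvd ?x * (?x * tt) - ?x" by (simp add: cong_iff_dvd_diff)
  hence "Pr dvd ?x * (?x * tt - 1)" by (simp add: algebra_simps)
  moreover have "\<not> Pr dvd ?x" using Pr_ndvd_theta by (simp add: TH_def)
  ultimately have "Pr dvd ?x * tt - 1" using irr_dvd_mult[OF irr] by blast
  thus ?thesis by (simp add: cong_iff_dvd_diff)
qed

lemma theta_tt_pow: "[(TH * tt) ^ k = 1] (mod Pr)"
  using cong_pow[OF theta_tt, of k] by simp

lemma tt_pow_card: "[tt ^ (CARD('a) ^ degree Pr - 1) = 1] (mod Pr)"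
proof -
  have e: "CARD('a) ^ degree Pr - 1 = Suc EE" using qd_ge2 by (simp add: EE_def)
  have "TH ^ Suc EE = TH * tt" unfolding tt_def by (rule power_Suc)
  hence "[TH ^ Suc EE = 1] (mod Pr)" using theta_tt by (simp only:)
  hence "[(TH ^ Suc EE) ^ EE = 1] (mod Pr)" using cong_pow by fastforce
  moreover have "(TH ^ Suc EE) ^ EE = tt ^ Suc EE" unfolding tt_def by (metis power_mult mult.commute)
  ultimately show ?thesis unfolding e by simp
qed

lemma pcompose_monom_tt: "pcompose (monom c j) tt = [:c:] * tt ^ j"
  by (simp add: monom_altdef pcompose_smult pcompose_power pcompose_pCons tt_def TH_def)

lemma rev_cong:
  assumes "degree p \<le> M"
  shows "[TH ^ M * pcompose (revp M p) tt = p] (mod Pr)"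
proof -
  let ?x = "TH :: 'a poly"
  have "?x ^ M * pcompose (revp M p) tt = (\<Sum>i\<le>M. [:coeff p i:] * (?x ^ i * (?x * tt) ^ (M - i)))"
  proof -
    have "?x ^ M * pcompose (revp M p) tt = (\<Sum>i\<le>M. ?x ^ M * ([:coeff p i:] * tt ^ (M - i)))"
      by (simp add: revp_def pcompose_sum pcompose_monom_tt sum_distrib_left)
    also have "\<dots> = (\<Sum>i\<le>M. [:coeff p i:] * (?x ^ i * (?x * tt) ^ (M - i)))"
    proof (intro sum.cong refl)
      fix i assume "i \<in> {..M}"
      hence "?x ^ M = ?x ^ i * ?x ^ (M - i)" by (simp flip: power_add)
      thus "?x ^ M * ([:coeff p i:] * tt ^ (M - i)) = [:coeff p i:] * (?x ^ i * (?x * tt) ^ (M - i))"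
        by (simp add: power_mult_distrib ac_simps)
    qed
    finally show ?thesis .
  qed
  also have "[\<dots> = (\<Sum>i\<le>M. [:coeff p i:] * (?x ^ i * 1))] (mod Pr)"
    by (intro cong_sum cong_mult cong_refl theta_tt_pow)
  also have "(\<Sum>i\<le>M. [:coeff p i:] * (?x ^ i * 1)) = p"
    using poly_as_sum_of_monoms'[OF assms] by (simp add: monom_altdef TH_def)
  finally show ?thesis .
qed


lemma Pr_ndvd_TH_pow: "\<not> Pr dvd TH ^ k"
  using Pr_ndvd_theta_pow by (simp add: TH_def)

lemma deg_iota: "degree (iota (degree Pr) Pr) = degree Pr"
proof -
  have e: "iota (degree Pr) Pr = revp (degree Pr) Pr" by (rule iota_revp) simp
  have "coeff (revp (degree Pr) Pr) (degree Pr) \<noteq> 0" using coeff_Pr_0 by (simp add: coeff_revp)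
  hence "degree Pr \<le> degree (revp (degree Pr) Pr)" by (rule le_degree)
  thus ?thesis using degree_revp[of "degree Pr" Pr] e by simp
qed

lemma dv3: "Pr dvd pcompose (iota (degree Pr) Pr) tt"
proof -
  have e: "iota (degree Pr) Pr = revp (degree Pr) Pr" by (rule iota_revp) simp
  have "[TH ^ degree Pr * pcompose (revp (degree Pr) Pr) tt = Pr] (mod Pr)" by (rule rev_cong) simp
  hence "Pr dvd TH ^ degree Pr * pcompose (revp (degree Pr) Pr) tt"
    by (simp add: cong_iff_dvd_diff dvd_diff_commute) (metis dvd_diff_commute dvd_refl dvd_add_left_iff diff_add_cancel)
  thus ?thesis unfolding e using irr_dvd_mult[OF irr] Pr_ndvd_TH_pow by blast
qed

lemma inj3:
  assumes "degree z < degree Pr" "Pr dvd pcompose z tt"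
  shows "z = 0"
proof -
  define w where "w = revp (degree Pr - 1) z"
  have dz: "degree z \<le> degree Pr - 1" using assms(1) by simp
  have zw: "revp (degree Pr - 1) w = z" unfolding w_def by (rule revp_revp[OF dz])
  have "[TH ^ (degree Pr - 1) * pcompose (revp (degree Pr - 1) w) tt = w] (mod Pr)"
    by (rule rev_cong) (simp add: w_def degree_revp)
  hence "[TH ^ (degree Pr - 1) * pcompose z tt = w] (mod Pr)" unfolding zw .
  moreover have "[TH ^ (degree Pr - 1) * pcompose z tt = 0] (mod Pr)"
    using assms(2) by (simp add: cong_0_iff)
  ultimately have "[w = 0] (mod Pr)" by (metis cong_sym cong_trans)
  hence "Pr dvd w" by (simp add: cong_0_iff)
  moreover have "degree w < degree Pr"
    using degree_revp[of "degree Pr - 1" z] irr_deg_pos[OF irr] by (simp add: w_def)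
  ultimately have "w = 0" using small_dvd_zero by blast
  thus ?thesis using zw by simp
qed

lemma P3:
  assumes "degree P \<le> m"
  shows "[pcompose (revp m P) tt = tt ^ m * P] (mod Pr)"
proof -
  have "[(TH * tt) ^ m * pcompose (revp m P) tt = 1 * pcompose (revp m P) tt] (mod Pr)"
    by (intro cong_mult theta_tt_pow cong_refl)
  moreover have "[tt ^ m * (TH ^ m * pcompose (revp m P) tt) = tt ^ m * P] (mod Pr)"
    by (intro cong_mult cong_refl rev_cong assms)
  moreover have "(TH * tt) ^ m * pcompose (revp m P) tt = tt ^ m * (TH ^ m * pcompose (revp m P) tt)"
    by (simp add: power_mult_distrib ac_simps)
  ultimately show ?thesis by (metis cong_sym cong_trans mult_1)
qed

lemma cg_const: "[a = b] (mod Pr) \<Longrightarrow> cg Pr [:a:] [:b:]"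
  by (simp add: cg_def cong_iff_dvd_diff)

lemma twist3:
  assumes "degree P \<le> m"
  shows "cg Pr (map_poly (\<lambda>c. pcompose c tt) (twistQ (revp m P) n))
              ([:tt ^ (m + n):] * ([:P:] * [:-1, TH:] ^ n))"
proof -
  have th: "pcompose [:0, 1:] tt = tt" by (simp add: pcompose_pCons)
  have e1: "map_poly (\<lambda>c. pcompose c tt) (twistQ (revp m P) n)
      = [:pcompose (revp m P) tt:] * [:- tt, 1:] ^ n"
    unfolding map_twist[OF hl_pcompose] th ..
  have c1: "cg Pr [:pcompose (revp m P) tt:] [:tt ^ m * P:]" by (rule cg_const[OF P3[OF assms]])
  have c2: "cg Pr [:- tt, 1:] ([:tt:] * [:-1, TH:])"
  proof -
    have "[1 = TH * tt] (mod Pr)" by (rule cong_sym[OF theta_tt])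
    hence "[coeff [:- tt, 1:] i = coeff ([:tt:] * [:-1, TH:]) i] (mod Pr)" for i
      by (cases i) (auto simp: coeff_pCons split: nat.split)
    thus ?thesis by (simp add: cg_coeff)
  qed
  have "cg Pr (map_poly (\<lambda>c. pcompose c tt) (twistQ (revp m P) n))
         ([:tt ^ m * P:] * ([:tt:] * [:-1, TH:]) ^ n)"
    unfolding e1 by (intro cg_mult cg_power c1 c2)
  moreover have "[:tt ^ m * P:] * ([:tt:] * [:-1, TH:]) ^ n = [:tt ^ (m + n):] * ([:P:] * [:-1, TH:] ^ n)"
  proof -
    have "[:tt ^ m * P:] = [:tt:] ^ m * [:P:]" by (simp add: poly_const_pow)
    moreover have "[:tt ^ (m + n):] = [:tt:] ^ m * [:tt:] ^ n" by (simp add: poly_const_pow power_add)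
    ultimately show ?thesis by (simp only: power_mult_distrib ac_simps)
  qed
  ultimately show ?thesis by simp
qed

end


lemma geom_nat: "(\<Sum>k<d. (q::nat) ^ k) * (q - 1) + 1 = q ^ d" if "q \<ge> 1"
proof (induction d)
  case 0 then show ?case by simp
next
  case (Suc d)
  have "(\<Sum>k<Suc d. q ^ k) * (q - 1) + 1 = ((\<Sum>k<d. q ^ k) * (q - 1) + 1) + q ^ d * (q - 1)"
    by (simp add: algebra_simps)
  also have "\<dots> = q ^ d + q ^ d * (q - 1)" using Suc by simp
  also have "\<dots> = q ^ Suc d" using that by (cases q) (auto simp: algebra_simps)
  finally show ?case .
qed

lemma cg_Nf: "cg Pr A B \<Longrightarrow> cg Pr (Nf d A) (Nf d B)"
  unfolding Nf_def by (intro cg_prod cg_FF)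

lemma Nf_const:
  fixes w :: "'a::{finite,field} poly"
  shows "Nf d [:w:] = [:w ^ (\<Sum>k<d. CARD('a::{finite,field}) ^ k):]"
proof -
  have "Nf d [:w:] = (\<Prod>k<d. [:fr k w:])"
    unfolding Nf_def FF_def by (simp add: map_poly_const_hl[OF hl_fr])
  also have "\<dots> = [:\<Prod>k<d. fr k w:]" by (rule hl_prod[OF hl_const_poly, symmetric])
  also have "(\<Prod>k<d. fr k w) = w ^ (\<Sum>k<d. CARD('a) ^ k)" by (simp add: fr_def power_sum)
  finally show ?thesis .
qed

lemma degree_twist:
  fixes P :: "'a::field poly"
  shows "degree (twistQ P n) \<le> n"
proof -
  have "degree (twistQ P n) \<le> degree [:P:] + degree ([:- [:0, 1::'a:], 1:] ^ n)"
    unfolding twistQ_def by (rule Polynomial.degree_mult_le)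
  also have "degree ([:- [:0, 1::'a:], 1:] ^ n) \<le> degree [:- [:0, 1::'a:], 1:] * n" by (rule degree_power_le)
  finally show ?thesis by simp
qed

lemma degree_FF: "degree (FF k X) \<le> degree X"
  unfolding FF_def by (rule map_poly_degree_leq)

lemma degree_Nf: "degree X \<le> N \<Longrightarrow> degree (Nf d X) \<le> N * d"
  unfolding Nf_def by (rule degree_prod_le_N) (use degree_FF order_trans in blast)

lemma degree_Qd: "degree (Qd Pr n P) \<le> n * degree Pr"
proof -
  have "Qd Pr n P = red Pr (Nf (degree Pr) (twistQ P n))"
    unfolding Qd_red by (rule red_cg[OF cg_Nr_Nf])
  also have "degree \<dots> \<le> degree (Nf (degree Pr) (twistQ P n))"
    unfolding red_def by (rule map_poly_degree_leq)
  also have "\<dots> \<le> n * degree Pr" by (rule degree_Nf[OF degree_twist])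
  finally show ?thesis .
qed

lemma red_revp: "red Pr (revp N Y) = revp N (red Pr Y)"
  unfolding red_lin by (rule revp_map) simp

lemma Nf_revp:
  assumes "degree X \<le> n"
  shows "Nf d (revp n X) = revp (n * d) (Nf d X)"
proof -
  have "Nf d (revp n X) = (\<Prod>k<d. revp n (FF k X))"
    unfolding Nf_def FF_def by (simp add: revp_map)
  also have "\<dots> = revp (n * d) (Nf d X)"
    unfolding Nf_def using assms degree_FF order_trans by (intro revp_prod[symmetric]) blast
  finally show ?thesis .
qed

lemma G_rev:
  "[:P:] * [:-1, TH:] ^ n = mc [:(-1) ^ n:] * revp n (twistQ (P::'a::field poly) n)"
proof -
  have r0: "revp 0 [:P:] = [:P:]" by (rule poly_eqI) (simp add: coeff_revp coeff_pCons split: nat.split)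
  have r1: "revp 1 [:- TH, 1:] = [:1, - TH:]"
    by (rule poly_eqI) (simp add: coeff_revp coeff_pCons split: nat.split)
  have "revp (1 * n) ([:- TH, 1:] ^ n) = revp 1 [:- TH, 1:] ^ n"
    by (rule revp_power) simp
  hence r2: "revp (1 * n) ([:- TH, 1:] ^ n) = [:1, - TH:] ^ n" unfolding r1 .
  have "revp n (twistQ P n) = revp (0 + 1 * n) ([:P:] * [:- TH, 1:] ^ n)"
    by (simp add: twistQ_def TH_def)
  also have "\<dots> = revp 0 [:P:] * revp (1 * n) ([:- TH, 1:] ^ n)"
    by (rule revp_mult) (simp, rule order.trans[OF Polynomial.degree_power_le], simp)
  also have "\<dots> = [:P:] * [:1, - TH:] ^ n" unfolding r0 r2 ..
  finally have 1: "revp n (twistQ P n) = [:P:] * [:1, - TH:] ^ n" .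
  have m1: "mc [:-1::'a:] = -1" by (simp add: mc_const one_pCons)
  have "mc [:(-1::'a) ^ n:] = mc ([:-1:] ^ n)" by (simp add: poly_const_pow)
  also have "\<dots> = mc [:-1:] ^ n" by (rule hl_power[OF hl_mc])
  finally have 2: "mc [:(-1) ^ n:] = ((-1) :: 'a poly poly) ^ n" unfolding m1 .
  have 3: "(-1 :: 'a poly poly) ^ n * [:1, - TH:] ^ n = [:-1, TH:] ^ n"
    by (simp add: power_mult_distrib[symmetric])
  show ?thesis unfolding 1 2 by (metis 3 mult.left_commute)
qed


lemma Qd3:
  fixes Pr P :: "'a::{finite,field} poly"
  assumes irr: "irreducible Pr" and na: "\<not> (Pr dvd [:0, 1:] \<and> [:0, 1:] dvd Pr)"
    and dP: "degree P \<le> m" and dv: "(CARD('a) - 1) dvd (m + n)"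
  shows "Qd (iota (degree Pr) Pr) n (iota m P) = revp (n * degree Pr) (Qd Pr n P) * [:((-1) ^ n) ^ degree Pr:]"
proof -
  let ?d = "degree Pr" and ?t = "tt Pr" and ?X = "twistQ P n"
  let ?w = "?t ^ (m + n)" and ?c = "(-1::'a) ^ n"
  let ?G = "[:P:] * [:-1, TH:] ^ n"
  have eP: "iota m P = revp m P" by (rule iota_revp[OF dP])
  have "Qd (iota ?d Pr) n (iota m P) = red (iota ?d Pr) (Nr (iota ?d Pr) (twistQ (iota m P) n))"
    by (rule Qd_red)
  also have "\<dots> = red Pr (Nr Pr (map_poly (\<lambda>c. pcompose c ?t) (twistQ (iota m P) n)))"
    by (rule transport[OF irr deg_iota[OF irr na] dv3[OF irr na] inj3[OF irr na]])
  also have "\<dots> = red Pr (Nf ?d (map_poly (\<lambda>c. pcompose c ?t) (twistQ (iota m P) n)))"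
    by (rule red_cg[OF cg_Nr_Nf])
  also have "\<dots> = red Pr (Nf ?d ([:?w:] * ?G))"
    unfolding eP by (rule red_cg[OF cg_Nf[OF twist3[OF irr na dP]]])
  also have "\<dots> = red Pr (Nf ?d ?G)"
  proof -
    obtain s where s: "m + n = (CARD('a) - 1) * s" using dv by (elim dvdE)
    have S: "(\<Sum>k<?d. CARD('a) ^ k) * (CARD('a) - 1) = CARD('a) ^ ?d - 1"
      using geom_nat[of "CARD('a)" ?d] card_ge2[where 'a='a] by simp
    let ?S = "\<Sum>k<?d. CARD('a) ^ k"
    have ex: "(m + n) * ?S = (CARD('a) ^ ?d - 1) * s"
      unfolding s S[symmetric] by (simp only: ac_simps)
    have "?w ^ ?S = ?t ^ ((m + n) * ?S)" by (simp only: power_mult)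
    also have "\<dots> = (?t ^ (CARD('a) ^ ?d - 1)) ^ s" unfolding ex by (simp only: power_mult)
    also have "[\<dots> = 1 ^ s] (mod Pr)" by (rule cong_pow[OF tt_pow_card[OF irr na]])
    also have "(1::'a poly) ^ s = 1" by simp
    finally have "cg Pr [:?w ^ ?S:] [:1:]" by (rule cg_const[OF irr na])
    hence "cg Pr (Nf ?d [:?w:]) 1" unfolding Nf_const by (simp only: one_pCons[symmetric])
    hence "cg Pr (Nf ?d [:?w:] * Nf ?d ?G) (1 * Nf ?d ?G)" by (intro cg_mult cg_refl)
    thus ?thesis unfolding Nf_mult by (simp add: red_cg)
  qed
  also have "Nf ?d ?G = revp (n * ?d) (Nf ?d ?X) * mc ([:?c:] ^ ?d)"
    unfolding G_rev Nf_mult Nf_mc Nf_revp[OF degree_twist] by (simp add: mult.commute)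
  also have "red Pr \<dots> = revp (n * ?d) (Qd Pr n P) * [:?c ^ ?d:]"
    unfolding red_mult_mc red_revp Qd_red red_cg[OF cg_Nr_Nf, symmetric] by (simp add: poly_const_pow)
  finally show ?thesis .
qed

lemma Tfr_nz: "(Tfr :: 'a::field poly fract) \<noteq> 0"
  by (simp add: Tfr_def Zero_fract_def eq_fract)

lemma ev_revp:
  fixes Q :: "'a::field poly"
  assumes "degree Q \<le> N" "x \<noteq> 0"
  shows "ev (revp N Q) (inverse x) = inverse x ^ N * ev Q x"
proof -
  have "ev (revp N Q) (inverse x) = poly (revp N (map_poly constfr Q)) (inverse x)"
    unfolding ev_def by (subst revp_map) (simp_all add: hlD(1)[OF hl_cf])
  also have "\<dots> = inverse x ^ N * ev Q x" unfolding ev_def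
    by (rule poly_revp[OF assms(2)]) (rule order.trans[OF map_poly_degree_leq assms(1)])
  finally show ?thesis .
qed

lemma alg_id:
  fixes u T A :: "'f::field"
  assumes N: "N = n * d"
  shows "(u ^ N * A * (-1) ^ N) ^ j * ((- T) ^ n) ^ (d * j) = A ^ j * (u * T) ^ (N * j)"
proof -
  have 1: "((- T) ^ n) ^ (d * j) = (-1) ^ (N * j) * T ^ (N * j)"
    unfolding N power_minus[of T] power_mult_distrib by (simp only: power_mult[symmetric] mult.assoc)
  have 2: "(u ^ N * A * (-1) ^ N) ^ j = u ^ (N * j) * A ^ j * (-1) ^ (N * j)"
    by (simp only: power_mult_distrib power_mult)
  have 3: "(-1 :: 'f) ^ (N * j) * (-1) ^ (N * j) = 1"
    by (simp only: power_mult_distrib[symmetric]) simp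
  have "(u ^ N * A * (-1) ^ N) ^ j * ((- T) ^ n) ^ (d * j)
      = A ^ j * (u ^ (N * j) * T ^ (N * j)) * ((-1) ^ (N * j) * (-1) ^ (N * j))"
    unfolding 1 2 by (simp only: ac_simps)
  also have "\<dots> = A ^ j * (u * T) ^ (N * j)" unfolding 3 by (simp add: power_mult_distrib)
  finally show ?thesis .
qed

lemma claim3:
  fixes Pr P :: "'a::{finite,field} poly"
  assumes irr: "irreducible Pr" and na: "\<not> (Pr dvd [:0, 1:] \<and> [:0, 1:] dvd Pr)"
    and dP: "degree P \<le> m" and cg: "[int m = - int n] (mod (int CARD('a) - 1))"
  shows "Lsub (iota (degree Pr) Pr) n (iota m P) (inverse Tfr) ((- Tfr) ^ n) = Lsub Pr n P Tfr 1"
proof -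
  have "int (CARD('a) - 1) dvd int (m + n)"
    using cg card_ge2[where 'a='a] by (simp add: cong_iff_dvd_diff of_nat_diff)
  hence dv: "(CARD('a) - 1) dvd (m + n)" by (simp only: int_dvd_int_iff)
  let ?d = "degree Pr" and ?T = "Tfr :: 'a poly fract"
  show ?thesis
  proof (rule Lsub_eqI)
    show "degree (iota ?d Pr) = ?d" by (rule deg_iota[OF irr na])
    fix j
    let ?A = "ev (Qd Pr n P) ?T" and ?N = "n * ?d"
    have cfm: "constfr (((-1::'a) ^ n) ^ ?d) = (-1) ^ ?N"
      by (simp add: hl_power[OF hl_cf] hl_uminus[OF hl_cf] hlD(2)[OF hl_cf] power_mult)
    have "ev (Qd (iota ?d Pr) n (iota m P) ^ j) (inverse ?T) * ((- ?T) ^ n) ^ (?d * j)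
        = (inverse ?T ^ ?N * ?A * (-1) ^ ?N) ^ j * ((- ?T) ^ n) ^ (?d * j)"
      unfolding Qd3[OF irr na dP dv] ev_power ev_mult ev_const cfm
        ev_revp[OF degree_Qd Tfr_nz] ..
    also have "\<dots> = ?A ^ j * (inverse ?T * ?T) ^ (?N * j)"
      by (rule alg_id) simp
    also have "inverse ?T * ?T = 1" using Tfr_nz by (rule left_inverse)
    also have "?A ^ j * 1 ^ (?N * j) = ?A ^ j" by simp
    finally show "ev (Qd (iota ?d Pr) n (iota m P) ^ j) (inverse ?T) * ((- ?T) ^ n) ^ (?d * j)
        = ev (Qd Pr n P ^ j) ?T * 1 ^ (?d * j)" by (simp add: ev_power)
  qed
qed


theorem lemma2p2:
  fixes P Pr :: "'a::{finite,field} poly" and n :: nat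
  assumes "n \<ge> 1" and "P \<noteq> 0" and "irreducible Pr"
  shows
   "(\<forall>b::'a. Lsub (pcompose Pr [:b, 1:]) n (pcompose P [:b, 1:]) (Tfr - constfr b) 1
              = Lsub Pr n P Tfr 1)
  \<and> (\<forall>c::'a. c \<noteq> 0 \<longrightarrow>
        Lsub (pcompose Pr [:0, c:]) n (pcompose P [:0, c:]) (constfr (inverse c) * Tfr) (constfr (c ^ n))
              = Lsub Pr n P Tfr 1)
  \<and> (\<forall>m::nat. \<not> (Pr dvd [:0, 1:] \<and> [:0, 1:] dvd Pr) \<and> m \<ge> degree P
        \<and> [int m = - int n] (mod (int CARD('a) - 1)) \<longrightarrow>
        Lsub (iota (degree Pr) Pr) n (iota m P) (inverse Tfr) ((- Tfr) ^ n)
              = Lsub Pr n P Tfr 1)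
  \<and> (\<forall>(emb :: 'a \<Rightarrow> 'b::field) (c :: 'b) (e :: 'a). is_field_hom emb \<and> e \<noteq> 0 \<and> c ^ n = emb e \<longrightarrow>
        Lsub Pr n (smult (inverse e) P) Tfr (constfr e) = Lsub Pr n P Tfr 1)
  \<and> (\<forall>k::nat. Lsub Pr (CARD('a) ^ k * n) P Tfr 1 = Lsub Pr n P (Tfr ^ (CARD('a) ^ k)) 1)"
proof (intro conjI allI impI)
  have irr: "irreducible Pr" by (fact assms(3))
  show "Lsub (pcompose Pr [:b, 1:]) n (pcompose P [:b, 1:]) (Tfr - constfr b) 1 = Lsub Pr n P Tfr 1" for b
    by (rule claim1[OF irr])
  show "Lsub (pcompose Pr [:0, c:]) n (pcompose P [:0, c:]) (constfr (inverse c) * Tfr) (constfr (c ^ n))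
        = Lsub Pr n P Tfr 1" if "c \<noteq> 0" for c
    by (rule claim2[OF irr that])
  show "Lsub (iota (degree Pr) Pr) n (iota m P) (inverse Tfr) ((- Tfr) ^ n) = Lsub Pr n P Tfr 1"
    if "\<not> (Pr dvd [:0, 1:] \<and> [:0, 1:] dvd Pr) \<and> m \<ge> degree P
        \<and> [int m = - int n] (mod (int CARD('a) - 1))" for m
    using that by (intro claim3[OF irr]) auto
  show "Lsub Pr n (smult (inverse e) P) Tfr (constfr e) = Lsub Pr n P Tfr 1"
    if "is_field_hom emb \<and> e \<noteq> 0 \<and> c ^ n = emb e" for emb :: "'a \<Rightarrow> 'b" and c e
    using that by (intro claim4) auto
  show "Lsub Pr (CARD('a) ^ k * n) P Tfr 1 = Lsub Pr n P (Tfr ^ (CARD('a) ^ k)) 1" for k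
    by (rule claim5[OF irr])
qed

end
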